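(* Suppose there is $x_0\in\mathbb{R}$ such that $k^2$ is continuous, nonincreasing on $(-\infty,x_0]$ and nondecreasing on $[x_0,\infty)$, with minimum value $k^2_{\min}=k^2(x_0)$ (which may be negative). Let $\Delta>0$ satisfy $k^2_{\min}\le\Delta^2\le\min\{k_{+\infty}^2,k_{-\infty}^2\}$. Then $$T\ \ge\ \mathrm{sech}^2\left\{\frac12\ln\frac{k_{+\infty}k_{-\infty}}{\Delta^2}+\frac{1}{2\Delta}\int_{\{x:\,k^2(x)<\Delta^2\}}\big(\Delta^2-k^2\big)\,\mathrm{d}x\right\}.$$
   Context: Standing setup: $k^2:\mathbb{R}\to\mathbb{R}$ is a piecewise continuous function (it may be negative somewhere) with $k^2(x)\to k_{\pm\infty}^2$ as $x\to\pm\infty$, where $k_{\pm\infty}>0$ and $k^2-k_{\pm\infty}^2$ is integrable near $\pm\infty$. For the equation $u''+k^2(x)u=0$ there is a solution with $u(x)=e^{ik_{-\infty}x}+r\,e^{-ik_{-\infty}x}+o(1)$ as $x\to-\infty$ and $u(x)=\tau\,e^{ik_{+\infty}x}+o(1)$ as $x\to+\infty$; the transmission probability is $T=(k_{+\infty}/k_{-\infty})|\tau|^2$. Here $\mathrm{sech}=1/\cosh$. *)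

theory Defs
  imports "HOL-Analysis.Analysis"
begin

definition sech :: "real \<Rightarrow> real" where
  "sech x = 1 / cosh x"

end

theory Submission
  imports Defs "HOL-Analysis.Analysis"
begin
lemma core_up:
  fixes T A B Rc :: real
  assumes T: "T \<ge> 1" and A: "A \<ge> 0" and B: "B \<ge> 0" and R: "Rc\<^sup>2 \<le> A * B"
  shows "T*A + B + sqrt ((T*A - B)\<^sup>2 + 4*T*Rc\<^sup>2) \<le> T*(A + B + sqrt ((A-B)\<^sup>2 + 4*Rc\<^sup>2))"
proof -
  define S where "S = sqrt ((A-B)\<^sup>2 + 4*Rc\<^sup>2)"
  have S2: "S\<^sup>2 = (A-B)\<^sup>2 + 4*Rc\<^sup>2" unfolding S_def by simp
  have Sge: "A - B \<le> S" unfolding S_def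
    by (metis add_increasing2 mult_nonneg_nonneg real_le_rsqrt zero_le_numeral zero_le_power2 order_refl abs_le_D1 real_sqrt_abs real_sqrt_le_mono le_add_same_cancel1)
  have S0: "S \<ge> 0" unfolding S_def by simp
  define Y where "Y = (T-1)*B + T*S"
  have Y0: "Y \<ge> 0" unfolding Y_def using T B S0 by simp
  have "Y\<^sup>2 - ((T*A - B)\<^sup>2 + 4*T*Rc\<^sup>2) = 2*(T-1)*T*(B*(B-A+S) + 2*Rc\<^sup>2)"
    unfolding Y_def using S2 by algebra
  moreover have "B*(B-A+S) + 2*Rc\<^sup>2 \<ge> 0" using Sge B by simp
  ultimately have "(T*A - B)\<^sup>2 + 4*T*Rc\<^sup>2 \<le> Y\<^sup>2" using T by (smt (verit) mult_nonneg_nonneg)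
  hence "sqrt ((T*A - B)\<^sup>2 + 4*T*Rc\<^sup>2) \<le> Y" using Y0 real_le_lsqrt by (metis real_sqrt_le_mono real_sqrt_pow2_iff real_sqrt_unique power2_eq_square Y0 real_le_rsqrt real_sqrt_le_iff  abs_of_nonneg real_sqrt_abs)
  thus ?thesis unfolding Y_def S_def by (simp add: algebra_simps)
qed


lemma core_down:
  fixes T A B Rc :: real
  assumes T: "T \<ge> 1" and A: "A \<ge> 0" and B: "B \<ge> 0"
  shows "A + B + sqrt ((A-B)\<^sup>2 + 4*Rc\<^sup>2) \<le> T*A + B + sqrt ((T*A - B)\<^sup>2 + 4*T*Rc\<^sup>2)"
proof -
  define S where "S = sqrt ((T*A-B)\<^sup>2 + 4*T*Rc\<^sup>2)"
  have S2: "S\<^sup>2 = (T*A-B)\<^sup>2 + 4*T*Rc\<^sup>2" unfolding S_def using T by simp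
  have "\<bar>T*A-B\<bar> \<le> S" unfolding S_def using T
    by (metis add_increasing2 mult_nonneg_nonneg real_sqrt_abs real_sqrt_le_mono le_add_same_cancel1 zero_le_numeral zero_le_power2 order_trans zero_le_one)
  hence Sge: "B - T*A \<le> S" by simp
  have S0: "S \<ge> 0" unfolding S_def using T by simp
  define Y where "Y = (T-1)*A + S"
  have Y0: "Y \<ge> 0" unfolding Y_def using T A S0 by simp
  have "Y\<^sup>2 - ((A - B)\<^sup>2 + 4*Rc\<^sup>2) = 2*(T-1)*(A*(T*A-B+S) + 2*Rc\<^sup>2)"
    unfolding Y_def using S2 by algebra
  moreover have "A*(T*A-B+S) + 2*Rc\<^sup>2 \<ge> 0" using Sge A by simp
  ultimately have "(A - B)\<^sup>2 + 4*Rc\<^sup>2 \<le> Y\<^sup>2" using T by (smt (verit) mult_nonneg_nonneg)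
  hence "sqrt ((A - B)\<^sup>2 + 4*Rc\<^sup>2) \<le> Y" using Y0 real_le_lsqrt by (metis real_sqrt_le_mono real_sqrt_abs abs_of_nonneg)
  thus ?thesis unfolding Y_def S_def by (simp add: algebra_simps)
qed

definition PF :: "real \<Rightarrow> real \<Rightarrow> real \<Rightarrow> real \<Rightarrow> real" where
  "PF c U V R = (c\<^sup>2*U + V + sqrt ((c\<^sup>2*U - V)\<^sup>2 + 4*(c*R)\<^sup>2)) / (2*c)"

lemma PF_nonneg: "c > 0 \<Longrightarrow> U \<ge> 0 \<Longrightarrow> V \<ge> 0 \<Longrightarrow> PF c U V R \<ge> 0"
  unfolding PF_def by simp

lemma PF_switch:
  assumes c: "c > 0" and c': "c' > 0" and U: "U \<ge> 0" and V: "V \<ge> 0" and R: "R\<^sup>2 \<le> U*V"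
  shows "PF c' U V R \<le> max (c'/c) (c/c') * PF c U V R"
proof (cases "c \<le> c'")
  case True
  define T where "T = (c'/c)\<^sup>2"
  have T1: "T \<ge> 1" unfolding T_def using True c by simp
  have RR: "(c*R)\<^sup>2 \<le> (c\<^sup>2*U)*V" using R c by (simp add: power_mult_distrib mult_left_mono)
  have "T*(c\<^sup>2*U) + V + sqrt ((T*(c\<^sup>2*U) - V)\<^sup>2 + 4*T*(c*R)\<^sup>2)
      \<le> T*(c\<^sup>2*U + V + sqrt ((c\<^sup>2*U-V)\<^sup>2 + 4*(c*R)\<^sup>2))"
    by (rule core_up[OF T1 _ V RR]) (use U in simp)
  moreover have e1: "T*(c\<^sup>2*U) = c'\<^sup>2*U" and e2: "4*T*(c*R)\<^sup>2 = 4*(c'*R)\<^sup>2" unfolding T_def using c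
    by (simp_all add: power_divide power_mult_distrib)
  ultimately have "c'\<^sup>2*U + V + sqrt ((c'\<^sup>2*U - V)\<^sup>2 + 4*(c'*R)\<^sup>2)
      \<le> T*(c\<^sup>2*U + V + sqrt ((c\<^sup>2*U-V)\<^sup>2 + 4*(c*R)\<^sup>2))" by (simp only: e1 e2)
  hence "2*c' * PF c' U V R \<le> T * (2*c*PF c U V R)" unfolding PF_def using c c' by simp
  hence "PF c' U V R \<le> (c'/c) * PF c U V R" unfolding T_def using c c'
    by (simp add: power2_eq_square field_simps)
  moreover have "(c'/c) * PF c U V R \<le> max (c'/c) (c/c') * PF c U V R"
    by (rule mult_right_mono[OF max.cobounded1 PF_nonneg[OF c U V]])
  ultimately show ?thesis by linarith
next
  case False
  define T where "T = (c/c')\<^sup>2"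
  have T1: "T \<ge> 1" unfolding T_def using False c' by simp
  have "c'\<^sup>2*U + V + sqrt ((c'\<^sup>2*U-V)\<^sup>2 + 4*(c'*R)\<^sup>2) \<le>
      T*(c'\<^sup>2*U) + V + sqrt ((T*(c'\<^sup>2*U) - V)\<^sup>2 + 4*T*(c'*R)\<^sup>2)"
    by (rule core_down[OF T1 _ V]) (use U in simp)
  moreover have e1: "T*(c'\<^sup>2*U) = c\<^sup>2*U" and e2: "4*T*(c'*R)\<^sup>2 = 4*(c*R)\<^sup>2" unfolding T_def using c'
    by (simp_all add: power_divide power_mult_distrib)
  ultimately have "c'\<^sup>2*U + V + sqrt ((c'\<^sup>2*U-V)\<^sup>2 + 4*(c'*R)\<^sup>2) \<le>
      c\<^sup>2*U + V + sqrt ((c\<^sup>2*U - V)\<^sup>2 + 4*(c*R)\<^sup>2)" by (simp only: e1 e2)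
  hence "2*c' * PF c' U V R \<le> 2*c*PF c U V R" unfolding PF_def using c c' by simp
  hence "PF c' U V R \<le> (c/c') * PF c U V R" using c c'
    by (simp add: field_simps)
  moreover have "(c/c') * PF c U V R \<le> max (c'/c) (c/c') * PF c U V R"
    by (rule mult_right_mono[OF max.cobounded2 PF_nonneg[OF c U V]])
  ultimately show ?thesis by linarith
qed

definition PP :: "real \<Rightarrow> complex \<Rightarrow> complex \<Rightarrow> real" where
  "PP c z w = (cmod (of_real c * z - \<i> * w) + cmod (of_real c * z + \<i> * w))\<^sup>2 / (4*c)"

lemma PP_PF:
  assumes c: "c > 0"
  shows "PP c z w = PF c ((cmod z)\<^sup>2) ((cmod w)\<^sup>2) (Re z * Re w + Im z * Im w)"
proof -
  define x1 y1 x2 y2 where "x1 = Re z" "y1 = Im z" "x2 = Re w" "y2 = Im w"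
  define q1 where "q1 = cmod (of_real c * z - \<i> * w)"
  define q2 where "q2 = cmod (of_real c * z + \<i> * w)"
  have q1s: "q1\<^sup>2 = (c*x1+y2)\<^sup>2 + (c*y1-x2)\<^sup>2" unfolding q1_def x1_y1_x2_y2_def cmod_power2 by simp
  have q2s: "q2\<^sup>2 = (c*x1-y2)\<^sup>2 + (c*y1+x2)\<^sup>2" unfolding q2_def x1_y1_x2_y2_def cmod_power2 by simp
  have U: "(cmod z)\<^sup>2 = x1\<^sup>2 + y1\<^sup>2" and V: "(cmod w)\<^sup>2 = x2\<^sup>2 + y2\<^sup>2"
    unfolding x1_y1_x2_y2_def cmod_power2 by simp_all
  have "(q1*q2)\<^sup>2 = (c\<^sup>2*(x1\<^sup>2 + y1\<^sup>2) - (x2\<^sup>2 + y2\<^sup>2))\<^sup>2 + 4*(c*(x1*x2+y1*y2))\<^sup>2"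
    unfolding power_mult_distrib q1s q2s by algebra
  hence "q1*q2 = sqrt ((c\<^sup>2*(x1\<^sup>2 + y1\<^sup>2) - (x2\<^sup>2 + y2\<^sup>2))\<^sup>2 + 4*(c*(x1*x2+y1*y2))\<^sup>2)"
    by (metis abs_of_nonneg mult_nonneg_nonneg norm_ge_zero q1_def q2_def real_sqrt_abs)
  note qq = this
  have "(q1+q2)\<^sup>2 = q1\<^sup>2 + q2\<^sup>2 + 2*(q1*q2)" by algebra
  also have "\<dots> = 2*(c\<^sup>2*(x1\<^sup>2 + y1\<^sup>2) + (x2\<^sup>2 + y2\<^sup>2)) + 2 * sqrt ((c\<^sup>2*(x1\<^sup>2 + y1\<^sup>2) - (x2\<^sup>2 + y2\<^sup>2))\<^sup>2 + 4*(c*(x1*x2+y1*y2))\<^sup>2)"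
    unfolding q1s q2s qq by (simp add: power2_eq_square algebra_simps)
  finally have "(q1+q2)\<^sup>2 = 2*(c\<^sup>2*(x1\<^sup>2 + y1\<^sup>2) + (x2\<^sup>2 + y2\<^sup>2)) + 2 * sqrt ((c\<^sup>2*(x1\<^sup>2 + y1\<^sup>2) - (x2\<^sup>2 + y2\<^sup>2))\<^sup>2 + 4*(c*(x1*x2+y1*y2))\<^sup>2)" .
  thus ?thesis unfolding PP_def PF_def q1_def[symmetric] q2_def[symmetric] U V x1_y1_x2_y2_def[symmetric]
    using c by (simp add: field_simps)
qed

lemma CS_R: "(Re z * Re w + Im z * Im w)\<^sup>2 \<le> (cmod z)\<^sup>2 * (cmod w)\<^sup>2"
proof -
  have "(cmod z)\<^sup>2 * (cmod w)\<^sup>2 - (Re z * Re w + Im z * Im w)\<^sup>2 = (Re z * Im w - Im z * Re w)\<^sup>2"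
    unfolding cmod_power2 by algebra
  thus ?thesis by (smt (verit) zero_le_power2)
qed

lemma PP_switch:
  assumes "c > 0" "c' > 0"
  shows "PP c' z w \<le> exp \<bar>ln c' - ln c\<bar> * PP c z w"
proof -
  have "max (c'/c) (c/c') = exp \<bar>ln c' - ln c\<bar>"
  proof (cases "c \<le> c'")
    case True
    hence "c/c' \<le> c'/c" using assms by (simp add: field_simps power2_eq_square mult_mono)
    moreover have "\<bar>ln c' - ln c\<bar> = ln c' - ln c" using True assms by simp
    ultimately show ?thesis using assms by (simp add: exp_diff max_def)
  next
    case False
    hence "c'/c \<le> c/c'" using assms by (simp add: field_simps power2_eq_square mult_mono)
    moreover have "\<bar>ln c' - ln c\<bar> = ln c - ln c'" using False assms by simp
    ultimately show ?thesis using assms by (simp add: exp_diff max_def)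
  qed
  thus ?thesis using PF_switch[OF assms(1,2) _ _ CS_R, of z w] assms
    by (simp add: PP_PF)
qed

lemma prod_id: "((c*x1+y2)\<^sup>2+(c*y1-x2)\<^sup>2)*((c*x1-y2)\<^sup>2+(c*y1+x2)\<^sup>2) =
   (c\<^sup>2*(x1\<^sup>2+y1\<^sup>2) - (x2\<^sup>2+y2\<^sup>2))\<^sup>2 + 4*(c*(x1*x2+y1*y2))\<^sup>2" for c x1 y1 x2 y2 :: real
  by (simp add: power2_eq_square algebra_simps)

lemma gron_eps:
  fixes X1 Y1 X2 Y2 k \<phi> :: "real \<Rightarrow> real" and c a b \<epsilon> :: real
  assumes dX1: "\<And>t. (X1 has_real_derivative X2 t) (at t)"
    and dY1: "\<And>t. (Y1 has_real_derivative Y2 t) (at t)"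
    and dX2: "\<And>t. (X2 has_real_derivative (- k t * X1 t)) (at t)"
    and dY2: "\<And>t. (Y2 has_real_derivative (- k t * Y1 t)) (at t)"
    and phi: "continuous_on UNIV \<phi>" and c: "c > 0" and ab: "a \<le> b"
    and bnd: "\<And>t. t \<in> {a..b} \<Longrightarrow> \<bar>k t - c\<^sup>2\<bar> \<le> c * \<phi> t"
    and eps: "\<epsilon> > 0"
  defines "a1 \<equiv> \<lambda>t. (c*X1 t + Y2 t)\<^sup>2 + (c*Y1 t - X2 t)\<^sup>2"
    and "a2 \<equiv> \<lambda>t. (c*X1 t - Y2 t)\<^sup>2 + (c*Y1 t + X2 t)\<^sup>2"
  shows "sqrt (a1 a + \<epsilon>) + sqrt (a2 a + \<epsilon>) \<le>
         (sqrt (a1 b + \<epsilon>) + sqrt (a2 b + \<epsilon>)) * exp (integral {a..b} \<phi> / 2)"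
proof -
  define R where "R = (\<lambda>t. X1 t * X2 t + Y1 t * Y2 t)"
  define D where "D = (\<lambda>t. 2 * (c\<^sup>2 - k t) * R t)"
  have da1: "(a1 has_real_derivative D t) (at t)" for t
  proof -
    have "((\<lambda>t. (c*X1 t + Y2 t)\<^sup>2 + (c*Y1 t - X2 t)\<^sup>2) has_real_derivative
       (2 * (c*X1 t + Y2 t) * (c * X2 t + (- k t * Y1 t)) + 2 * (c*Y1 t - X2 t) * (c * Y2 t - (- k t * X1 t)))) (at t)"
      by (auto intro!: derivative_eq_intros dX1 dY1 dX2 dY2 simp: algebra_simps)
    moreover have "2 * (c*X1 t + Y2 t) * (c * X2 t + (- k t * Y1 t)) + 2 * (c*Y1 t - X2 t) * (c * Y2 t - (- k t * X1 t)) = D t"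
      unfolding D_def R_def by (simp add: algebra_simps power2_eq_square)
    ultimately show ?thesis unfolding a1_def by simp
  qed
  have da2: "(a2 has_real_derivative D t) (at t)" for t
  proof -
    have "((\<lambda>t. (c*X1 t - Y2 t)\<^sup>2 + (c*Y1 t + X2 t)\<^sup>2) has_real_derivative
       (2 * (c*X1 t - Y2 t) * (c * X2 t - (- k t * Y1 t)) + 2 * (c*Y1 t + X2 t) * (c * Y2 t + (- k t * X1 t)))) (at t)"
      by (auto intro!: derivative_eq_intros dX1 dY1 dX2 dY2 simp: algebra_simps)
    moreover have "2 * (c*X1 t - Y2 t) * (c * X2 t - (- k t * Y1 t)) + 2 * (c*Y1 t + X2 t) * (c * Y2 t + (- k t * X1 t)) = D t"
      unfolding D_def R_def by (simp add: algebra_simps power2_eq_square)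
    ultimately show ?thesis unfolding a2_def by simp
  qed
  have a1_0: "a1 t \<ge> 0" and a2_0: "a2 t \<ge> 0" for t unfolding a1_def a2_def by simp_all
  have prod: "a1 t * a2 t = (c\<^sup>2*((X1 t)\<^sup>2 + (Y1 t)\<^sup>2) - ((X2 t)\<^sup>2 + (Y2 t)\<^sup>2))\<^sup>2 + 4*(c * R t)\<^sup>2" for t
    unfolding a1_def a2_def R_def by (rule prod_id)
  have cR: "2 * c * \<bar>R t\<bar> \<le> sqrt (a1 t) * sqrt (a2 t)" for t
  proof -
    have "(2 * c * \<bar>R t\<bar>)\<^sup>2 \<le> a1 t * a2 t" unfolding prod by (simp add: power_mult_distrib)
    hence "2 * c * \<bar>R t\<bar> \<le> sqrt (a1 t * a2 t)" using real_le_rsqrt by blast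
    thus ?thesis by (simp add: real_sqrt_mult)
  qed
  define I where "I = (\<lambda>x. integral {a-1..x} \<phi>)"
  define s1 where "s1 = (\<lambda>t. sqrt (a1 t + \<epsilon>))"
  define s2 where "s2 = (\<lambda>t. sqrt (a2 t + \<epsilon>))"
  have s1p: "s1 t > 0" and s2p: "s2 t > 0" for t unfolding s1_def s2_def using a1_0 a2_0 eps
    by (simp_all add: add_nonneg_pos)
  define H where "H = (\<lambda>t. (s1 t + s2 t) * exp (I t / 2))"
  have dI: "(I has_real_derivative \<phi> t) (at t)" if "t \<in> {a..b}" for t
  proof -
    have "(I has_real_derivative \<phi> t) (at t within {a-1..b+1})"
      unfolding I_def by (rule integral_has_real_derivative) (use that phi continuous_on_subset in auto)
    moreover have "at t within {a-1..b+1} = at t"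
      by (rule at_within_interior) (use that in auto)
    ultimately show ?thesis by simp
  qed
  have "H a \<le> H b"
  proof (rule DERIV_nonneg_imp_nondecreasing[OF ab])
    fix t assume t: "a \<le> t" "t \<le> b"
    have ds1: "(s1 has_real_derivative D t / (2 * s1 t)) (at t)"
      unfolding s1_def using da1[of t] a1_0[of t] eps
      by (auto intro!: derivative_eq_intros simp: add_nonneg_pos) (simp add: field_simps)
    have ds2: "(s2 has_real_derivative D t / (2 * s2 t)) (at t)"
      unfolding s2_def using da2[of t] a2_0[of t] eps
      by (auto intro!: derivative_eq_intros simp: add_nonneg_pos) (simp add: field_simps)
    have dH: "(H has_real_derivative
       ((D t / (2 * s1 t) + D t / (2 * s2 t)) * exp (I t / 2) + (s1 t + s2 t) * (exp (I t / 2) * (\<phi> t / 2)))) (at t)"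
      unfolding H_def using t by (auto intro!: derivative_eq_intros ds1 ds2 dI simp: algebra_simps)
    have tab: "t \<in> {a..b}" using t by simp
    have "0 \<le> c * \<phi> t" using bnd[OF tab] by (meson abs_ge_zero order_trans)
    hence ph0: "\<phi> t \<ge> 0" using c by (simp add: zero_le_mult_iff)
    have sq1: "sqrt (a1 t) \<le> s1 t" unfolding s1_def using eps by simp
    have sq2: "sqrt (a2 t) \<le> s2 t" unfolding s2_def using eps by simp
    have m: "\<bar>D t / 2\<bar> \<le> \<phi> t / 2 * (s1 t * s2 t)"
    proof -
      have "\<bar>D t / 2\<bar> = \<bar>c\<^sup>2 - k t\<bar> * \<bar>R t\<bar>" proof -
        have "D t / 2 = (c\<^sup>2 - k t) * R t" unfolding D_def by simp
        thus ?thesis by (simp only: abs_mult)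
      qed
      also have "\<dots> \<le> (c * \<phi> t) * \<bar>R t\<bar>" using bnd[OF tab] by (intro mult_right_mono) (auto simp: abs_minus_commute)
      also have "\<dots> = \<phi> t / 2 * (2 * c * \<bar>R t\<bar>)" by simp
      also have "\<dots> \<le> \<phi> t / 2 * (sqrt (a1 t) * sqrt (a2 t))"
        using cR[of t] ph0 by (intro mult_left_mono) auto
      also have "\<dots> \<le> \<phi> t / 2 * (s1 t * s2 t)"
        using ph0 sq1 sq2 s1p[of t] a2_0[of t] by (intro mult_left_mono mult_mono) auto
      finally show ?thesis .
    qed
    have Dlow: "D t \<ge> - (\<phi> t * (s1 t * s2 t))" using m by (simp add: abs_le_iff)
    have "D t / (2 * s1 t) \<ge> - (\<phi> t * (s1 t * s2 t)) / (2 * s1 t)"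
      by (rule divide_right_mono[OF Dlow]) (use s1p[of t] in simp)
    moreover have "- (\<phi> t * (s1 t * s2 t)) / (2 * s1 t) = - (\<phi> t / 2 * s2 t)" using s1p[of t] by (simp add: field_simps)
    moreover have "D t / (2 * s2 t) \<ge> - (\<phi> t * (s1 t * s2 t)) / (2 * s2 t)"
      by (rule divide_right_mono[OF Dlow]) (use s2p[of t] in simp)
    moreover have "- (\<phi> t * (s1 t * s2 t)) / (2 * s2 t) = - (\<phi> t / 2 * s1 t)" using s2p[of t] by (simp add: field_simps)
    moreover have "(s1 t + s2 t) * (\<phi> t / 2) = \<phi> t / 2 * s1 t + \<phi> t / 2 * s2 t" by (simp add: algebra_simps)
    ultimately have "D t / (2 * s1 t) + D t / (2 * s2 t) + (s1 t + s2 t) * (\<phi> t / 2) \<ge> 0"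
      by linarith
    hence "0 \<le> (D t / (2 * s1 t) + D t / (2 * s2 t) + (s1 t + s2 t) * (\<phi> t / 2)) * exp (I t / 2)"
      by simp
    also have "\<dots> = ((D t / (2 * s1 t) + D t / (2 * s2 t)) * exp (I t / 2) + (s1 t + s2 t) * (exp (I t / 2) * (\<phi> t / 2)))"
      by (simp add: algebra_simps)
    finally have "((D t / (2 * s1 t) + D t / (2 * s2 t)) * exp (I t / 2) + (s1 t + s2 t) * (exp (I t / 2) * (\<phi> t / 2))) \<ge> 0" .
    thus "\<exists>y. DERIV H t :> y \<and> 0 \<le> y" using dH by blast
  qed
  moreover have "I b - I a = integral {a..b} \<phi>"
  proof -
    have "\<phi> integrable_on {a-1..b}" using phi by (intro integrable_continuous_real continuous_on_subset[OF phi]) auto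
    from Henstock_Kurzweil_Integration.integral_combine[OF _ ab this] show ?thesis unfolding I_def by simp
  qed
  ultimately have "(s1 a + s2 a) * exp (I a / 2) \<le> (s1 b + s2 b) * exp (integral {a..b} \<phi> / 2) * exp (I a / 2)"
    unfolding H_def by (simp add: mult.assoc flip: exp_add) (simp add: field_simps)
  thus ?thesis unfolding s1_def s2_def by simp
qed


lemma gron_PP:
  fixes u u' :: "real \<Rightarrow> complex" and k2 \<phi> :: "real \<Rightarrow> real" and c a b :: real
  assumes u_deriv: "\<And>x. (u has_vector_derivative u' x) (at x)"
    and u'_deriv: "\<And>x. (u' has_vector_derivative (- complex_of_real (k2 x) * u x)) (at x)"
    and phi: "continuous_on UNIV \<phi>" and c: "c > 0" and ab: "a \<le> b"
    and bnd: "\<And>t. t \<in> {a..b} \<Longrightarrow> \<bar>k2 t - c\<^sup>2\<bar> \<le> c * \<phi> t"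
  shows "PP c (u a) (u' a) \<le> PP c (u b) (u' b) * exp (integral {a..b} \<phi>)"
proof -
  define X1 where "X1 = (\<lambda>t. Re (u t))"
  define Y1 where "Y1 = (\<lambda>t. Im (u t))"
  define X2 where "X2 = (\<lambda>t. Re (u' t))"
  define Y2 where "Y2 = (\<lambda>t. Im (u' t))"
  have dX1: "(X1 has_real_derivative X2 t) (at t)" for t
    unfolding X1_def X2_def by (rule has_field_derivative_Re[OF u_deriv])
  have dY1: "(Y1 has_real_derivative Y2 t) (at t)" for t
    unfolding Y1_def Y2_def by (rule has_field_derivative_Im[OF u_deriv])
  have dX2: "(X2 has_real_derivative (- k2 t * X1 t)) (at t)" for t
    using has_field_derivative_Re[OF u'_deriv[of t]] unfolding X1_def X2_def by simp
  have dY2: "(Y2 has_real_derivative (- k2 t * Y1 t)) (at t)" for t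
    using has_field_derivative_Im[OF u'_deriv[of t]] unfolding Y1_def Y2_def by simp
  define a1 where "a1 \<equiv> \<lambda>t. (c*X1 t + Y2 t)\<^sup>2 + (c*Y1 t - X2 t)\<^sup>2"
  define a2 where "a2 \<equiv> \<lambda>t. (c*X1 t - Y2 t)\<^sup>2 + (c*Y1 t + X2 t)\<^sup>2"
  have m1: "cmod (of_real c * u t - \<i> * u' t) = sqrt (a1 t)" for t
    unfolding a1_def X1_def Y1_def X2_def Y2_def cmod_def by simp
  have m2: "cmod (of_real c * u t + \<i> * u' t) = sqrt (a2 t)" for t
    unfolding a2_def X1_def Y1_def X2_def Y2_def cmod_def by simp
  define E where "E = exp (integral {a..b} \<phi> / 2)"
  have E0: "E > 0" unfolding E_def by simp
  have ineq: "sqrt (a1 a + e) + sqrt (a2 a + e) \<le> (sqrt (a1 b + e) + sqrt (a2 b + e)) * E" if "e > 0" for e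
    using gron_eps[OF dX1 dY1 dX2 dY2 phi c ab bnd that] unfolding a1_def a2_def E_def by simp
  have le: "sqrt (a1 a) + sqrt (a2 a) \<le> (sqrt (a1 b) + sqrt (a2 b)) * E"
  proof (rule tendsto_le[OF trivial_limit_at_right_real])
    show "((\<lambda>e. (sqrt (a1 b + e) + sqrt (a2 b + e)) * E) \<longlongrightarrow> (sqrt (a1 b) + sqrt (a2 b)) * E) (at_right 0)"
    proof -
      have "((\<lambda>e. (sqrt (a1 b + e) + sqrt (a2 b + e)) * E) \<longlongrightarrow> (sqrt (a1 b + 0) + sqrt (a2 b + 0)) * E) (at_right 0)"
        by (intro tendsto_intros tendsto_ident_at)
      thus ?thesis by simp
    qed
    show "((\<lambda>e. sqrt (a1 a) + sqrt (a2 a)) \<longlongrightarrow> sqrt (a1 a) + sqrt (a2 a)) (at_right 0)" by simp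
    show "\<forall>\<^sub>F e in at_right 0. sqrt (a1 a) + sqrt (a2 a) \<le> (sqrt (a1 b + e) + sqrt (a2 b + e)) * E"
    proof (rule eventually_mono[OF eventually_at_right_less[of 0]])
      fix e :: real assume e: "0 < e"
      have "sqrt (a1 a) \<le> sqrt (a1 a + e)" "sqrt (a2 a) \<le> sqrt (a2 a + e)" using e by simp_all
      with ineq[OF e] show "sqrt (a1 a) + sqrt (a2 a) \<le> (sqrt (a1 b + e) + sqrt (a2 b + e)) * E" by linarith
    qed
  qed
  have "(sqrt (a1 a) + sqrt (a2 a))\<^sup>2 \<le> ((sqrt (a1 b) + sqrt (a2 b)) * E)\<^sup>2"
    using le by (intro power_mono) (simp_all add: a1_def a2_def)
  also have "\<dots> = (sqrt (a1 b) + sqrt (a2 b))\<^sup>2 * exp (integral {a..b} \<phi>)"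
    unfolding E_def by (simp add: power_mult_distrib power2_eq_square flip: exp_add)
  finally have "(sqrt (a1 a) + sqrt (a2 a))\<^sup>2 / (4*c) \<le> (sqrt (a1 b) + sqrt (a2 b))\<^sup>2 * exp (integral {a..b} \<phi>) / (4*c)"
    using c by (simp add: divide_right_mono)
  thus ?thesis unfolding PP_def m1 m2 by simp
qed

context
  fixes u u' :: "real \<Rightarrow> complex" and k2 g C :: "real \<Rightarrow> real" and \<Delta> :: real
  assumes u_deriv: "\<And>x. (u has_vector_derivative u' x) (at x)"
    and u'_deriv: "\<And>x. (u' has_vector_derivative (- complex_of_real (k2 x) * u x)) (at x)"
    and g_cont: "continuous_on UNIV g" and Dpos: "\<Delta> > 0"
    and Cge: "\<And>t. \<Delta>\<^sup>2 \<le> C t" and kC: "\<And>t. \<bar>k2 t - C t\<bar> \<le> \<Delta> * g t"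
begin

lemma g_nonneg: "g t \<ge> 0"
  using kC[of t] Dpos by (smt (verit) abs_ge_zero zero_le_mult_iff)

lemma C_pos: "C t > 0"
  using Cge[of t] Dpos by (smt (verit) zero_less_power)

lemma sqrtC_ge: "sqrt (C t) \<ge> \<Delta>"
  using Cge[of t] Dpos by (metis abs_of_pos real_sqrt_abs real_sqrt_le_mono)

lemma piece:
  assumes yz: "y \<le> z" and mono: "\<And>t. t \<in> {y..z} \<Longrightarrow> \<bar>C t - C y\<bar> \<le> \<bar>C z - C y\<bar>"
  shows "PP (sqrt (C y)) (u y) (u' y) \<le> PP (sqrt (C z)) (u z) (u' z) *
     exp (\<bar>ln (C z) / 2 - ln (C y) / 2\<bar> + integral {y..z} g + (z - y) * \<bar>C z - C y\<bar> / \<Delta>)"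
proof -
  define c0 where "c0 = sqrt (C y)"
  define K where "K = \<bar>C z - C y\<bar> / \<Delta>"
  have c0: "c0 > 0" "c0 \<ge> \<Delta>" unfolding c0_def using C_pos[of y] sqrtC_ge[of y] by auto
  have c0sq: "c0\<^sup>2 = C y" unfolding c0_def using C_pos[of y] by simp
  have K0: "K \<ge> 0" unfolding K_def using Dpos by simp
  have phi: "continuous_on UNIV (\<lambda>t. g t + K)" by (intro continuous_intros g_cont)
  have bnd: "\<bar>k2 t - c0\<^sup>2\<bar> \<le> c0 * (g t + K)" if t: "t \<in> {y..z}" for t
  proof -
    have "\<bar>k2 t - c0\<^sup>2\<bar> \<le> \<bar>k2 t - C t\<bar> + \<bar>C t - C y\<bar>" unfolding c0sq by linarith
    also have "\<dots> \<le> \<Delta> * g t + \<Delta> * K" using kC[of t] mono[OF t] Dpos unfolding K_def by simp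
    also have "\<dots> \<le> c0 * g t + c0 * K" using c0 g_nonneg[of t] K0
      by (intro add_mono mult_right_mono) auto
    finally show ?thesis by (simp add: algebra_simps)
  qed
  have G: "PP c0 (u y) (u' y) \<le> PP c0 (u z) (u' z) * exp (integral {y..z} (\<lambda>t. g t + K))"
    by (rule gron_PP[OF u_deriv u'_deriv phi c0(1) yz bnd])
  have int: "integral {y..z} (\<lambda>t. g t + K) = integral {y..z} g + (z - y) * K"
  proof -
    have "g integrable_on {y..z}" by (intro integrable_continuous_real continuous_on_subset[OF g_cont]) auto
    hence "integral {y..z} (\<lambda>t. g t + K) = integral {y..z} g + integral {y..z} (\<lambda>t. K)"
      by (intro Henstock_Kurzweil_Integration.integral_add) auto
    thus ?thesis using yz by simp
  qed
  have S: "PP c0 (u z) (u' z) \<le> exp \<bar>ln (sqrt (C z)) - ln c0\<bar> * PP (sqrt (C z)) (u z) (u' z)"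
    using PP_switch[of "sqrt (C z)" c0 "u z" "u' z"] c0(1) C_pos[of z] by (simp add: abs_minus_commute)
  have lnC: "ln (sqrt (C z)) - ln c0 = ln (C z) / 2 - ln (C y) / 2"
    unfolding c0_def using C_pos[of z] C_pos[of y] by (simp add: ln_sqrt)
  have "PP c0 (u y) (u' y) \<le> exp \<bar>ln (C z) / 2 - ln (C y) / 2\<bar> * PP (sqrt (C z)) (u z) (u' z)
        * exp (integral {y..z} g + (z - y) * K)"
    using G S unfolding int lnC by (smt (verit) exp_gt_zero mult_right_mono)
  thus ?thesis unfolding c0_def K_def by (simp add: exp_add mult_ac)
qed


lemma absadd: "(p \<le> q \<and> q \<le> r) \<or> (r \<le> q \<and> q \<le> p) \<Longrightarrow> \<bar>r - p\<bar> = \<bar>q - p\<bar> + \<bar>r - q\<bar>" for p q r :: real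
  by auto

lemma multi:
  assumes ab: "a \<le> b"
    and MONO: "(\<forall>x y. a \<le> x \<longrightarrow> x \<le> y \<longrightarrow> y \<le> b \<longrightarrow> C x \<le> C y) \<or> (\<forall>x y. a \<le> x \<longrightarrow> x \<le> y \<longrightarrow> y \<le> b \<longrightarrow> C y \<le> C x)"
    and n: "n > 0"
  shows "PP (sqrt (C a)) (u a) (u' a) \<le> PP (sqrt (C b)) (u b) (u' b) *
     exp (\<bar>ln (C b) / 2 - ln (C a) / 2\<bar> + integral {a..b} g + (b - a) / real n * \<bar>C b - C a\<bar> / \<Delta>)"
proof -
  define h where "h = (b - a) / real n"
  define x where "x = (\<lambda>m::nat. a + real m * h)"
  define F where "F = (\<lambda>t. PP (sqrt (C t)) (u t) (u' t))"
  define L where "L = (\<lambda>t. ln (C t) / 2)"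
  have h0: "h \<ge> 0" unfolding h_def using ab by simp
  have xin: "a \<le> x m \<and> x m \<le> b" if "m \<le> n" for m
  proof -
    have "real m * h \<le> real n * h" using that h0 by (intro mult_right_mono) auto
    also have "real n * h = b - a" unfolding h_def using n by simp
    finally show ?thesis unfolding x_def using h0 by simp
  qed
  have xn: "x n = b" unfolding x_def h_def using n by simp
  have x0: "x 0 = a" unfolding x_def by simp
  have xmono: "x m \<le> x (Suc m)" for m unfolding x_def using h0 by (simp add: algebra_simps)
  have xstep: "x (Suc m) - x m = h" for m unfolding x_def by (simp add: algebra_simps)
  have Lmono: "L p \<le> L q" if "C p \<le> C q" for p q
    unfolding L_def using that C_pos[of p] C_pos[of q] by simp
  have gint: "g integrable_on {p..q}" for p q
    by (intro integrable_continuous_real continuous_on_subset[OF g_cont]) auto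
  have "F a \<le> F (x m) * exp (\<bar>L (x m) - L a\<bar> + integral {a..x m} g + h * \<bar>C (x m) - C a\<bar> / \<Delta>)"
    if "m \<le> n" for m
    using that
  proof (induction m)
    case 0
    show ?case unfolding x0 by simp
  next
    case (Suc m)
    have m: "m \<le> n" using Suc.prems by simp
    have y: "a \<le> x m" "x m \<le> b" using xin[OF m] by auto
    have z: "a \<le> x (Suc m)" "x (Suc m) \<le> b" using xin[OF Suc.prems] by auto
    have ord: "(C a \<le> C (x m) \<and> C (x m) \<le> C (x (Suc m))) \<or> (C (x (Suc m)) \<le> C (x m) \<and> C (x m) \<le> C a)"
      using MONO y z xmono[of m] by auto
    have pmono: "\<bar>C t - C (x m)\<bar> \<le> \<bar>C (x (Suc m)) - C (x m)\<bar>" if t: "t \<in> {x m..x (Suc m)}" for t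
    proof -
      have "a \<le> t" "t \<le> b" using t y z by auto
      thus ?thesis using MONO t y z by auto
    qed
    have P: "F (x m) \<le> F (x (Suc m)) * exp (\<bar>L (x (Suc m)) - L (x m)\<bar> + integral {x m..x (Suc m)} g
        + h * \<bar>C (x (Suc m)) - C (x m)\<bar> / \<Delta>)"
      using piece[OF xmono[of m] pmono] unfolding F_def L_def xstep by simp
    have e1: "\<bar>L (x (Suc m)) - L a\<bar> = \<bar>L (x m) - L a\<bar> + \<bar>L (x (Suc m)) - L (x m)\<bar>"
      by (rule absadd) (use ord Lmono in blast)
    have e2: "\<bar>C (x (Suc m)) - C a\<bar> = \<bar>C (x m) - C a\<bar> + \<bar>C (x (Suc m)) - C (x m)\<bar>"
      by (rule absadd) (use ord in blast)
    have e3: "integral {a..x (Suc m)} g = integral {a..x m} g + integral {x m..x (Suc m)} g"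
      using Henstock_Kurzweil_Integration.integral_combine[OF y(1) xmono[of m] gint] by simp
    have "F a \<le> F (x m) * exp (\<bar>L (x m) - L a\<bar> + integral {a..x m} g + h * \<bar>C (x m) - C a\<bar> / \<Delta>)"
      using Suc.IH m by simp
    also have "\<dots> \<le> F (x (Suc m)) * exp (\<bar>L (x (Suc m)) - L (x m)\<bar> + integral {x m..x (Suc m)} g
        + h * \<bar>C (x (Suc m)) - C (x m)\<bar> / \<Delta>) * exp (\<bar>L (x m) - L a\<bar> + integral {a..x m} g + h * \<bar>C (x m) - C a\<bar> / \<Delta>)"
      by (rule mult_right_mono[OF P]) simp
    also have "\<dots> = F (x (Suc m)) * exp (\<bar>L (x (Suc m)) - L a\<bar> + integral {a..x (Suc m)} g + h * \<bar>C (x (Suc m)) - C a\<bar> / \<Delta>)"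
      unfolding e1 e2 e3 by (simp add: mult.assoc algebra_simps add_divide_distrib flip: exp_add)
    finally show ?case .
  qed
  from this[of n] show ?thesis unfolding xn F_def L_def h_def by simp
qed

lemma region:
  assumes ab: "a \<le> b"
    and MONO: "(\<forall>x y. a \<le> x \<longrightarrow> x \<le> y \<longrightarrow> y \<le> b \<longrightarrow> C x \<le> C y) \<or> (\<forall>x y. a \<le> x \<longrightarrow> x \<le> y \<longrightarrow> y \<le> b \<longrightarrow> C y \<le> C x)"
  shows "PP (sqrt (C a)) (u a) (u' a) \<le> PP (sqrt (C b)) (u b) (u' b) *
     exp (\<bar>ln (C b) / 2 - ln (C a) / 2\<bar> + integral {a..b} g)"
proof (rule LIMSEQ_le_const)
  define Y where "Y = \<bar>ln (C b) / 2 - ln (C a) / 2\<bar> + integral {a..b} g"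
  define K where "K = \<bar>C b - C a\<bar> / \<Delta>"
  have "(\<lambda>n. PP (sqrt (C b)) (u b) (u' b) * exp (Y + (b - a) / real n * K)) \<longlonglongrightarrow> PP (sqrt (C b)) (u b) (u' b) * exp (Y + 0 * K)"
    by (intro tendsto_intros)
  thus "(\<lambda>n. PP (sqrt (C b)) (u b) (u' b) * exp (\<bar>ln (C b) / 2 - ln (C a) / 2\<bar> + integral {a..b} g + (b - a) / real n * \<bar>C b - C a\<bar> / \<Delta>))
      \<longlonglongrightarrow> PP (sqrt (C b)) (u b) (u' b) * exp (\<bar>ln (C b) / 2 - ln (C a) / 2\<bar> + integral {a..b} g)"
    unfolding Y_def K_def by simp
  show "\<exists>N. \<forall>n\<ge>N. PP (sqrt (C a)) (u a) (u' a) \<le> PP (sqrt (C b)) (u b) (u' b) * exp (\<bar>ln (C b) / 2 - ln (C a) / 2\<bar> + integral {a..b} g + (b - a) / real n * \<bar>C b - C a\<bar> / \<Delta>)"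
    using multi[OF ab MONO] by (intro exI[of _ 1]) auto
qed

end

lemma expderiv: "((\<lambda>t. exp (\<i> * of_real (k*t))) has_vector_derivative (\<i> * of_real k * exp (\<i> * of_real (k*t)))) (at t)"
proof -
  have "((\<lambda>z. exp (\<i> * of_real k * z)) has_field_derivative (\<i> * of_real k * exp (\<i> * of_real k * of_real t))) (at (of_real t))"
    by (auto intro!: derivative_eq_intros)
  from has_vector_derivative_real_field[OF this] show ?thesis by (simp add: mult.assoc)
qed

lemma landau_bound:
  fixes v v1 v2 :: "real \<Rightarrow> complex"
  assumes d1: "\<And>t. (v has_vector_derivative v1 t) (at t)"
    and d2: "\<And>t. (v1 has_vector_derivative v2 t) (at t)"
    and B: "\<And>t. t \<in> {x..x+1} \<Longrightarrow> norm (v2 t) \<le> B"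
  shows "norm (v1 x) \<le> norm (v (x+1)) + norm (v x) + 3*B"
proof -
  let ?S = "{x..x+1}"
  have xS: "x \<in> ?S" by simp
  have B0: "B \<ge> 0" using B[OF xS] norm_ge_zero order_trans by blast
  have v1b: "norm (v1 t - v1 x) \<le> 3*B" if t: "t \<in> ?S" for t
  proof -
    have "norm (v1 t - v1 x - (t - x) *\<^sub>R v2 x) \<le> norm (t - x) * (2*B)"
    proof (rule vector_differentiable_bound_linearization[of ?S v1 v2])
      show "\<And>s. s \<in> ?S \<Longrightarrow> (v1 has_vector_derivative v2 s) (at s within ?S)"
        using d2 has_vector_derivative_at_within by blast
      show "closed_segment x t \<subseteq> ?S" using t by (simp add: closed_segment_eq_real_ivl)
      show "\<And>s. s \<in> ?S \<Longrightarrow> norm (v2 s - v2 x) \<le> 2*B"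
      proof -
        fix s assume "s \<in> ?S"
        thus "norm (v2 s - v2 x) \<le> 2*B" using B[of s] B[OF xS] norm_triangle_ineq4[of "v2 s" "v2 x"] by linarith
      qed
      show "x \<in> ?S" by simp
    qed
    moreover have "norm ((t - x) *\<^sub>R v2 x) \<le> B"
    proof -
      have "norm ((t - x) *\<^sub>R v2 x) = \<bar>t - x\<bar> * norm (v2 x)" by simp
      also have "\<dots> \<le> 1 * B" using t B[OF xS] by (intro mult_mono) auto
      finally show ?thesis by simp
    qed
    moreover have "norm (t - x) \<le> 1" using t by auto
    moreover have "norm (t - x) * (2*B) \<le> 1 * (2*B)" using B0 \<open>norm (t - x) \<le> 1\<close> by (intro mult_right_mono) auto
    moreover have "norm (v1 t - v1 x) \<le> norm (v1 t - v1 x - (t - x) *\<^sub>R v2 x) + norm ((t - x) *\<^sub>R v2 x)"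
      using norm_triangle_sub[of "v1 t - v1 x" "(t - x) *\<^sub>R v2 x"] by linarith
    ultimately show ?thesis by linarith
  qed
  have "norm (v (x+1) - v x - ((x+1) - x) *\<^sub>R v1 x) \<le> norm ((x+1) - x) * (3*B)"
  proof (rule vector_differentiable_bound_linearization[of ?S v v1])
    show "\<And>s. s \<in> ?S \<Longrightarrow> (v has_vector_derivative v1 s) (at s within ?S)"
      using d1 has_vector_derivative_at_within by blast
    show "closed_segment x (x+1) \<subseteq> ?S" by (simp add: closed_segment_eq_real_ivl)
    show "\<And>s. s \<in> ?S \<Longrightarrow> norm (v1 s - v1 x) \<le> 3*B" by (rule v1b)
    show "x \<in> ?S" by simp
  qed
  hence "norm (v (x+1) - v x - v1 x) \<le> 3*B" by simp
  moreover have "norm (v1 x) \<le> norm (v (x+1) - v x - v1 x) + norm (v (x+1) - v x)"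
    using norm_triangle_ineq4[of "v (x+1) - v x - v1 x" "v (x+1) - v x"] by (simp add: norm_minus_commute)
  moreover have "norm (v (x+1) - v x) \<le> norm (v (x+1)) + norm (v x)" by (rule norm_triangle_ineq4)
  ultimately show ?thesis by linarith
qed

lemma landau_top:
  fixes v v1 v2 :: "real \<Rightarrow> complex"
  assumes d1: "\<And>t. (v has_vector_derivative v1 t) (at t)"
    and d2: "\<And>t. (v1 has_vector_derivative v2 t) (at t)"
    and l0: "(v \<longlongrightarrow> 0) at_top" and l2: "(v2 \<longlongrightarrow> 0) at_top"
  shows "(v1 \<longlongrightarrow> 0) at_top"
proof (rule tendsto_iff[THEN iffD2], intro allI impI)
  fix e :: real assume e: "e > 0"
  have "\<forall>\<^sub>F t in at_top. dist (v t) 0 < e/6" using l0 e tendsto_iff by (metis divide_pos_pos zero_less_numeral)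
  then obtain N1 where N1: "\<And>t. t \<ge> N1 \<Longrightarrow> norm (v t) < e/6" by (auto simp: eventually_at_top_linorder)
  have "\<forall>\<^sub>F t in at_top. dist (v2 t) 0 < e/6" using l2 e tendsto_iff by (metis divide_pos_pos zero_less_numeral)
  then obtain N2 where N2: "\<And>t. t \<ge> N2 \<Longrightarrow> norm (v2 t) < e/6" by (auto simp: eventually_at_top_linorder)
  show "\<forall>\<^sub>F t in at_top. dist (v1 t) 0 < e"
    unfolding eventually_at_top_linorder
  proof (intro exI[of _ "max N1 N2"] allI impI)
    fix x assume x: "x \<ge> max N1 N2"
    have "norm (v1 x) \<le> norm (v (x+1)) + norm (v x) + 3*(e/6)"
      by (rule landau_bound[OF d1 d2]) (use x N2 in \<open>auto intro: less_imp_le\<close>)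
    moreover have "norm (v (x+1)) < e/6" "norm (v x) < e/6" using x N1 by auto
    ultimately have "norm (v1 x) < e" using e by linarith
    thus "dist (v1 x) 0 < e" by simp
  qed
qed

lemma landau_bot:
  fixes v v1 v2 :: "real \<Rightarrow> complex"
  assumes d1: "\<And>t. (v has_vector_derivative v1 t) (at t)"
    and d2: "\<And>t. (v1 has_vector_derivative v2 t) (at t)"
    and l0: "(v \<longlongrightarrow> 0) at_bot" and l2: "(v2 \<longlongrightarrow> 0) at_bot"
  shows "(v1 \<longlongrightarrow> 0) at_bot"
proof (rule tendsto_iff[THEN iffD2], intro allI impI)
  fix e :: real assume e: "e > 0"
  have "\<forall>\<^sub>F t in at_bot. dist (v t) 0 < e/6" using l0 e tendsto_iff by (metis divide_pos_pos zero_less_numeral)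
  then obtain N1 where N1: "\<And>t. t \<le> N1 \<Longrightarrow> norm (v t) < e/6" by (auto simp: eventually_at_bot_linorder)
  have "\<forall>\<^sub>F t in at_bot. dist (v2 t) 0 < e/6" using l2 e tendsto_iff by (metis divide_pos_pos zero_less_numeral)
  then obtain N2 where N2: "\<And>t. t \<le> N2 \<Longrightarrow> norm (v2 t) < e/6" by (auto simp: eventually_at_bot_linorder)
  show "\<forall>\<^sub>F t in at_bot. dist (v1 t) 0 < e"
    unfolding eventually_at_bot_linorder
  proof (intro exI[of _ "min N1 N2 - 1"] allI impI)
    fix x assume x: "x \<le> min N1 N2 - 1"
    have "norm (v1 x) \<le> norm (v (x+1)) + norm (v x) + 3*(e/6)"
      by (rule landau_bound[OF d1 d2]) (use x N2 in \<open>auto intro: less_imp_le\<close>)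
    moreover have "norm (v (x+1)) < e/6" "norm (v x) < e/6" using x N1 by auto
    ultimately have "norm (v1 x) < e" using e by linarith
    thus "dist (v1 x) 0 < e" by simp
  qed
qed

lemma prod_lim:
  fixes f g A B :: "real \<Rightarrow> complex"
  assumes "((\<lambda>t. f t - A t) \<longlongrightarrow> 0) F" "((\<lambda>t. g t - B t) \<longlongrightarrow> 0) F"
    and "\<And>t. norm (A t) \<le> MA" "\<And>t. norm (B t) \<le> MB"
  shows "((\<lambda>t. cnj (f t) * g t - cnj (A t) * B t) \<longlongrightarrow> 0) F"
proof (rule tendsto_0_le)
  show "((\<lambda>t. norm (f t - A t) * (norm (g t - B t) + MB) + MA * norm (g t - B t)) \<longlongrightarrow> 0) F"
    using tendsto_add[OF tendsto_mult[OF tendsto_norm[OF assms(1)] tendsto_add[OF tendsto_norm[OF assms(2)] tendsto_const]]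
        tendsto_mult[OF tendsto_const tendsto_norm[OF assms(2)]]] by simp
  show "\<forall>\<^sub>F t in F. norm (cnj (f t) * g t - cnj (A t) * B t) \<le>
      norm (norm (f t - A t) * (norm (g t - B t) + MB) + MA * norm (g t - B t)) * 1"
  proof (rule always_eventually, rule allI)
    fix t
    have eq: "cnj (f t) * g t - cnj (A t) * B t = cnj (f t - A t) * g t + cnj (A t) * (g t - B t)"
      by (simp add: algebra_simps)
    have "norm (cnj (f t) * g t - cnj (A t) * B t) \<le> norm (f t - A t) * norm (g t) + norm (A t) * norm (g t - B t)"
      unfolding eq by (metis complex_mod_cnj norm_mult norm_triangle_ineq)
    also have "\<dots> \<le> norm (f t - A t) * (norm (g t - B t) + MB) + MA * norm (g t - B t)"
    proof (intro add_mono mult_left_mono mult_right_mono)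
      show "norm (g t) \<le> norm (g t - B t) + MB" using assms(4)[of t] norm_triangle_sub[of "g t" "B t"] by linarith
    qed (use assms(3) in auto)
    finally show "norm (cnj (f t) * g t - cnj (A t) * B t) \<le>
      norm (norm (f t - A t) * (norm (g t - B t) + MB) + MA * norm (g t - B t)) * 1" by simp
  qed
qed

lemma norm_lim:
  fixes f A :: "real \<Rightarrow> complex"
  assumes "((\<lambda>t. f t - A t) \<longlongrightarrow> 0) F" "\<And>t. norm (A t) = L"
  shows "((\<lambda>t. norm (f t)) \<longlongrightarrow> L) F"
proof -
  have "((\<lambda>t. norm (f t) - L) \<longlongrightarrow> 0) F"
  proof (rule tendsto_0_le[OF assms(1), of _ 1])
    show "\<forall>\<^sub>F t in F. norm (norm (f t) - L) \<le> norm (f t - A t) * 1"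
    proof (rule always_eventually, rule allI)
      fix t show "norm (norm (f t) - L) \<le> norm (f t - A t) * 1"
        using norm_triangle_ineq3[of "f t" "A t"] assms(2)[of t] by simp
    qed
  qed
  thus ?thesis by (simp add: LIM_zero_iff)
qed

lemma bounded_mult_lim:
  fixes c :: "real \<Rightarrow> real" and z A :: "real \<Rightarrow> complex"
  assumes "(c \<longlongrightarrow> 0) F" "((\<lambda>t. z t - A t) \<longlongrightarrow> 0) F" "\<And>t. norm (A t) \<le> M"
  shows "((\<lambda>t. of_real (c t) * z t) \<longlongrightarrow> 0) F"
proof (rule tendsto_0_le)
  show "((\<lambda>t. \<bar>c t\<bar> * (norm (z t - A t) + M)) \<longlongrightarrow> 0) F"
    using tendsto_mult[OF tendsto_rabs[OF assms(1)] tendsto_add[OF tendsto_norm[OF assms(2)] tendsto_const]] by simp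
  show "\<forall>\<^sub>F t in F. norm (of_real (c t) * z t) \<le> norm (\<bar>c t\<bar> * (norm (z t - A t) + M)) * 1"
  proof (rule always_eventually, rule allI)
    fix t
    have "norm (z t) \<le> norm (z t - A t) + M" using assms(3)[of t] norm_triangle_sub[of "z t" "A t"] by linarith
    hence "\<bar>c t\<bar> * norm (z t) \<le> \<bar>c t\<bar> * (norm (z t - A t) + M)" by (rule mult_left_mono) simp
    thus "norm (of_real (c t) * z t) \<le> norm (\<bar>c t\<bar> * (norm (z t - A t) + M)) * 1"
      by (simp add: norm_mult)
  qed
qed

lemma Im_flux_bot: "Im (cnj (cis th + r * cis (-th)) * (\<i> * of_real k * cis th - \<i> * of_real k * r * cis (-th))) = k * (1 - (cmod r)\<^sup>2)"
proof -
  have 1: "k * (cmod r * cmod r) = k * (Re r * Re r) + k * (Im r * Im r)"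
    using cmod_power2[of r] by (simp add: power2_eq_square algebra_simps)
  have 2: "k * (cos th * cos th) + k * (sin th * sin th) = k"
    using sin_cos_squared_add3[of th] by (metis distrib_left mult.right_neutral add.commute)
  show ?thesis by (simp add: cmod_power2 algebra_simps power2_eq_square cis.sel) (use 1 2 in linarith)
qed

lemma PP_lim:
  fixes c :: "real \<Rightarrow> real" and z w A B :: "real \<Rightarrow> complex"
  assumes c: "(c \<longlongrightarrow> ci) F" and ci: "ci > 0"
    and z: "((\<lambda>t. z t - A t) \<longlongrightarrow> 0) F" and w: "((\<lambda>t. w t - B t) \<longlongrightarrow> 0) F"
    and M: "\<And>t. norm (A t) \<le> M"
    and L1: "\<And>t. norm (of_real ci * A t - \<i> * B t) = L1"
    and L2: "\<And>t. norm (of_real ci * A t + \<i> * B t) = L2"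
  shows "((\<lambda>t. PP (c t) (z t) (w t)) \<longlongrightarrow> (L1 + L2)\<^sup>2 / (4 * ci)) F"
proof -
  have c0: "((\<lambda>t. c t - ci) \<longlongrightarrow> 0) F" using c by (simp add: LIM_zero)
  have m: "((\<lambda>t. of_real (c t - ci) * z t) \<longlongrightarrow> 0) F" by (rule bounded_mult_lim[OF c0 z M])
  have z': "((\<lambda>t. of_real ci * (z t - A t)) \<longlongrightarrow> 0) F" using tendsto_mult[OF tendsto_const z] by simp
  have w': "((\<lambda>t. \<i> * (w t - B t)) \<longlongrightarrow> 0) F" using tendsto_mult[OF tendsto_const w] by simp
  have e1: "((\<lambda>t. (of_real (c t) * z t - \<i> * w t) - (of_real ci * A t - \<i> * B t)) \<longlongrightarrow> 0) F"
  proof -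
    have "((\<lambda>t. of_real (c t - ci) * z t + of_real ci * (z t - A t) - \<i> * (w t - B t)) \<longlongrightarrow> 0 + 0 - 0) F"
      by (intro tendsto_intros m z' w')
    moreover have "of_real (c t - ci) * z t + of_real ci * (z t - A t) - \<i> * (w t - B t)
       = (of_real (c t) * z t - \<i> * w t) - (of_real ci * A t - \<i> * B t)" for t
      by (simp add: algebra_simps)
    ultimately show ?thesis by simp
  qed
  have e2: "((\<lambda>t. (of_real (c t) * z t + \<i> * w t) - (of_real ci * A t + \<i> * B t)) \<longlongrightarrow> 0) F"
  proof -
    have "((\<lambda>t. of_real (c t - ci) * z t + of_real ci * (z t - A t) + \<i> * (w t - B t)) \<longlongrightarrow> 0 + 0 + 0) F"
      by (intro tendsto_intros m z' w')
    moreover have "of_real (c t - ci) * z t + of_real ci * (z t - A t) + \<i> * (w t - B t)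
       = (of_real (c t) * z t + \<i> * w t) - (of_real ci * A t + \<i> * B t)" for t
      by (simp add: algebra_simps)
    ultimately show ?thesis by simp
  qed
  have n1: "((\<lambda>t. cmod (of_real (c t) * z t - \<i> * w t)) \<longlongrightarrow> L1) F" by (rule norm_lim[OF e1 L1])
  have n2: "((\<lambda>t. cmod (of_real (c t) * z t + \<i> * w t)) \<longlongrightarrow> L2) F" by (rule norm_lim[OF e2 L2])
  have "((\<lambda>t. (cmod (of_real (c t) * z t - \<i> * w t) + cmod (of_real (c t) * z t + \<i> * w t))\<^sup>2 / (4 * c t))
     \<longlongrightarrow> (L1 + L2)\<^sup>2 / (4 * ci)) F"
    using ci by (intro tendsto_intros n1 n2 c) auto
  thus ?thesis unfolding PP_def .
qed

context
  fixes k2 :: "real \<Rightarrow> real" and kp km :: real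
    and u u' :: "real \<Rightarrow> complex" and r \<tau> :: complex
  assumes kp_pos: "kp > 0" and km_pos: "km > 0"
    and lim_top: "(k2 \<longlongrightarrow> kp\<^sup>2) at_top"
    and lim_bot: "(k2 \<longlongrightarrow> km\<^sup>2) at_bot"
    and u_deriv: "\<And>x. (u has_vector_derivative u' x) (at x)"
    and u'_deriv: "\<And>x. (u' has_vector_derivative (- complex_of_real (k2 x) * u x)) (at x)"
    and asym_bot: "((\<lambda>x. u x - (exp (\<i> * of_real (km * x)) + r * exp (- \<i> * of_real (km * x))))
                      \<longlongrightarrow> 0) at_bot"
    and asym_top: "((\<lambda>x. u x - \<tau> * exp (\<i> * of_real (kp * x))) \<longlongrightarrow> 0) at_top"
begin

lemma up_top: "((\<lambda>t. u' t - \<i> * of_real kp * \<tau> * exp (\<i> * of_real (kp * t))) \<longlongrightarrow> 0) at_top"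
proof -
  define E where "E = (\<lambda>t. exp (\<i> * of_real (kp * t)))"
  have dE: "(E has_vector_derivative (\<i> * of_real kp * E t)) (at t)" for t
    unfolding E_def by (rule expderiv)
  define v where "v = (\<lambda>t. u t - \<tau> * E t)"
  define v1 where "v1 = (\<lambda>t. u' t - \<tau> * (\<i> * of_real kp * E t))"
  define v2 where "v2 = (\<lambda>t. - complex_of_real (k2 t) * u t - \<tau> * (\<i> * of_real kp * (\<i> * of_real kp * E t)))"
  have d1: "(v has_vector_derivative v1 t) (at t)" for t
    unfolding v_def v1_def by (intro derivative_intros u_deriv dE)
  have d2: "(v1 has_vector_derivative v2 t) (at t)" for t
    unfolding v1_def v2_def by (intro derivative_intros u'_deriv dE)
  have l0: "(v \<longlongrightarrow> 0) at_top" using asym_top unfolding v_def E_def .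
  have kl: "((\<lambda>t. k2 t - kp\<^sup>2) \<longlongrightarrow> 0) at_top" using lim_top by (simp add: LIM_zero)
  have nE: "norm (\<tau> * E t) \<le> cmod \<tau>" for t unfolding E_def by (simp add: norm_mult)
  have m: "((\<lambda>t. of_real (k2 t - kp\<^sup>2) * u t) \<longlongrightarrow> 0) at_top"
    by (rule bounded_mult_lim[OF kl _ nE]) (use l0 in \<open>simp add: v_def\<close>)
  have "((\<lambda>t. - (of_real (k2 t - kp\<^sup>2) * u t) - of_real (kp\<^sup>2) * v t) \<longlongrightarrow> - 0 - of_real (kp\<^sup>2) * 0) at_top"
    by (intro tendsto_intros m l0)
  moreover have "- (of_real (k2 t - kp\<^sup>2) * u t) - of_real (kp\<^sup>2) * v t = v2 t" for t
    unfolding v_def v2_def by (simp add: algebra_simps power2_eq_square)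
  ultimately have l2: "(v2 \<longlongrightarrow> 0) at_top" by simp
  have "(v1 \<longlongrightarrow> 0) at_top" by (rule landau_top[OF d1 d2 l0 l2])
  thus ?thesis unfolding v1_def E_def by (simp add: mult_ac)
qed

lemma up_bot: "((\<lambda>t. u' t - (\<i> * of_real km * exp (\<i> * of_real (km * t)) - \<i> * of_real km * r * exp (\<i> * of_real ((-km) * t)))) \<longlongrightarrow> 0) at_bot"
proof -
  define E where "E = (\<lambda>t. exp (\<i> * of_real (km * t)))"
  define Em where "Em = (\<lambda>t. exp (\<i> * of_real ((-km) * t)))"
  have dE: "(E has_vector_derivative (\<i> * of_real km * E t)) (at t)" for t
    unfolding E_def by (rule expderiv)
  have dEm: "(Em has_vector_derivative (\<i> * of_real (-km) * Em t)) (at t)" for t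
    unfolding Em_def by (rule expderiv)
  define v where "v = (\<lambda>t. u t - (E t + r * Em t))"
  define v1 where "v1 = (\<lambda>t. u' t - (\<i> * of_real km * E t + r * (\<i> * of_real (-km) * Em t)))"
  define v2 where "v2 = (\<lambda>t. - complex_of_real (k2 t) * u t - (\<i> * of_real km * (\<i> * of_real km * E t) + r * (\<i> * of_real (-km) * (\<i> * of_real (-km) * Em t))))"
  have d1: "(v has_vector_derivative v1 t) (at t)" for t
    unfolding v_def v1_def by (intro derivative_intros u_deriv dE dEm)
  have d2: "(v1 has_vector_derivative v2 t) (at t)" for t
    unfolding v1_def v2_def by (intro derivative_intros u'_deriv dE dEm)
  have l0: "(v \<longlongrightarrow> 0) at_bot" using asym_bot unfolding v_def E_def Em_def by simp
  have kl: "((\<lambda>t. k2 t - km\<^sup>2) \<longlongrightarrow> 0) at_bot" using lim_bot by (simp add: LIM_zero)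
  have nE: "norm (E t + r * Em t) \<le> 1 + cmod r" for t unfolding E_def Em_def
    by (metis norm_triangle_ineq norm_mult norm_exp_i_times mult.right_neutral)
  have m: "((\<lambda>t. of_real (k2 t - km\<^sup>2) * u t) \<longlongrightarrow> 0) at_bot"
    by (rule bounded_mult_lim[OF kl _ nE]) (use l0 in \<open>simp add: v_def\<close>)
  have "((\<lambda>t. - (of_real (k2 t - km\<^sup>2) * u t) - of_real (km\<^sup>2) * v t) \<longlongrightarrow> - 0 - of_real (km\<^sup>2) * 0) at_bot"
    by (intro tendsto_intros m l0)
  moreover have "- (of_real (k2 t - km\<^sup>2) * u t) - of_real (km\<^sup>2) * v t = v2 t" for t
    unfolding v_def v2_def by (simp add: algebra_simps power2_eq_square)
  ultimately have l2: "(v2 \<longlongrightarrow> 0) at_bot" by simp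
  have "(v1 \<longlongrightarrow> 0) at_bot" by (rule landau_bot[OF d1 d2 l0 l2])
  thus ?thesis unfolding v1_def E_def Em_def by (simp add: mult_ac)
qed


lemma flux_const: "Im (cnj (u s) * u' s) = Im (cnj (u t) * u' t)"
proof -
  have "((\<lambda>t. Im (cnj (u t) * u' t)) has_real_derivative 0) (at t)" for t
  proof -
    have "((\<lambda>t. cnj (u t) * u' t) has_vector_derivative (cnj (u t) * (- complex_of_real (k2 t) * u t) + cnj (u' t) * u' t)) (at t)"
      by (intro derivative_intros u_deriv u'_deriv)
    from has_field_derivative_Im[OF this] show ?thesis by (simp add: algebra_simps)
  qed
  thus ?thesis using DERIV_isconst_all[of "\<lambda>t. Im (cnj (u t) * u' t)" s t] by blast
qed

lemma flux_top: "Im (cnj (u t) * u' t) = kp * (cmod \<tau>)\<^sup>2"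
proof -
  define E where "E = (\<lambda>t. exp (\<i> * of_real (kp * t)))"
  have nE: "norm (E t) = 1" for t unfolding E_def by simp
  have "((\<lambda>t. cnj (u t) * u' t - cnj (\<tau> * E t) * (\<i> * of_real kp * \<tau> * E t)) \<longlongrightarrow> 0) at_top"
    by (rule prod_lim[where MA = "cmod \<tau>" and MB = "kp * cmod \<tau>"]) (use asym_top up_top kp_pos in \<open>auto simp: E_def norm_mult\<close>)
  hence "((\<lambda>t. Im (cnj (u t) * u' t) - Im (cnj (\<tau> * E t) * (\<i> * of_real kp * \<tau> * E t))) \<longlongrightarrow> 0) at_top"
    using tendsto_Im by fastforce
  moreover have imq: "Im (cnj (\<tau> * E t) * (\<i> * of_real kp * \<tau> * E t)) = kp * (cmod \<tau>)\<^sup>2" for t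
  proof -
    have "cnj (\<tau> * E t) * (\<i> * of_real kp * \<tau> * E t) = \<i> * of_real kp * (cnj \<tau> * \<tau>) * (cnj (E t) * E t)"
      by (simp add: algebra_simps)
    also have "cnj (E t) * E t = 1" using nE[of t] by (metis complex_norm_square mult.commute of_real_1 power_one)
    also have "cnj \<tau> * \<tau> = of_real ((cmod \<tau>)\<^sup>2)" by (metis complex_norm_square mult.commute of_real_power)
    also have "\<i> * of_real kp * of_real ((cmod \<tau>)\<^sup>2) * 1 = \<i> * of_real (kp * (cmod \<tau>)\<^sup>2)" by simp
    finally have "cnj (\<tau> * E t) * (\<i> * of_real kp * \<tau> * E t) = \<i> * of_real (kp * (cmod \<tau>)\<^sup>2)" .
    thus ?thesis by (simp only: Im_i_times Re_complex_of_real)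
  qed
  ultimately have "((\<lambda>s::real. Im (cnj (u t) * u' t) - (kp * (cmod \<tau>)\<^sup>2)) \<longlongrightarrow> 0) at_top"
  proof -
    assume lim: "((\<lambda>s. Im (cnj (u s) * u' s) - Im (cnj (\<tau> * E s) * (\<i> * of_real kp * \<tau> * E s))) \<longlongrightarrow> 0) at_top"
    have eq: "(\<lambda>s. Im (cnj (u s) * u' s) - Im (cnj (\<tau> * E s) * (\<i> * of_real kp * \<tau> * E s))) = (\<lambda>s::real. Im (cnj (u t) * u' t) - (kp * (cmod \<tau>)\<^sup>2))"
    proof (rule ext)
      fix s show "Im (cnj (u s) * u' s) - Im (cnj (\<tau> * E s) * (\<i> * of_real kp * \<tau> * E s)) = Im (cnj (u t) * u' t) - (kp * (cmod \<tau>)\<^sup>2)"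
        using flux_const[of s t] imq[of s] by (simp only:)
    qed
    show ?thesis using lim unfolding eq .
  qed
  hence "((\<lambda>s::real. Im (cnj (u t) * u' t)) \<longlongrightarrow> kp * (cmod \<tau>)\<^sup>2) at_top" by (simp add: LIM_zero_iff)
  thus ?thesis by (simp add: tendsto_const_iff)
qed

lemma flux_bot: "Im (cnj (u t) * u' t) = km * (1 - (cmod r)\<^sup>2)"
proof -
  define A where "A = (\<lambda>t. exp (\<i> * of_real (km * t)) + r * exp (- \<i> * of_real (km * t)))"
  define B where "B = (\<lambda>t. \<i> * of_real km * exp (\<i> * of_real (km * t)) - \<i> * of_real km * r * exp (\<i> * of_real ((-km) * t)))"
  have nA: "norm (A t) \<le> 1 + cmod r" for t
  proof -
    have "norm (A t) \<le> norm (exp (\<i> * of_real (km * t))) + norm (r * exp (- \<i> * of_real (km * t)))"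
      unfolding A_def by (rule norm_triangle_ineq)
    also have "\<dots> = 1 + cmod r" by (simp add: norm_mult norm_exp_eq_Re)
    finally show ?thesis .
  qed
  have nB: "norm (B t) \<le> km + km * cmod r" for t unfolding B_def
  proof -
    have "norm (\<i> * of_real km * exp (\<i> * of_real (km * t)) - \<i> * of_real km * r * exp (\<i> * of_real ((-km) * t)))
      \<le> norm (\<i> * of_real km * exp (\<i> * of_real (km * t))) + norm (\<i> * of_real km * r * exp (\<i> * of_real ((-km) * t)))"
      by (rule norm_triangle_ineq4)
    also have "\<dots> = km + km * cmod r" using km_pos by (simp add: norm_mult)
    finally show "norm (\<i> * of_real km * exp (\<i> * of_real (km * t)) - \<i> * of_real km * r * exp (\<i> * of_real ((-km) * t))) \<le> km + km * cmod r" .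
  qed
  have "((\<lambda>t. cnj (u t) * u' t - cnj (A t) * B t) \<longlongrightarrow> 0) at_bot"
    by (rule prod_lim[OF _ _ nA nB]) (use asym_bot up_bot in \<open>simp_all add: A_def B_def\<close>)
  hence "((\<lambda>t. Im (cnj (u t) * u' t) - Im (cnj (A t) * B t)) \<longlongrightarrow> 0) at_bot"
    using tendsto_Im by fastforce
  moreover have imq: "Im (cnj (A t) * B t) = km * (1 - (cmod r)\<^sup>2)" for t
  proof -
    have "A t = cis (km * t) + r * cis (- (km * t))" "B t = \<i> * of_real km * cis (km * t) - \<i> * of_real km * r * cis (- (km * t))"
      unfolding A_def B_def by (simp_all add: cis_conv_exp)
    thus ?thesis by (simp only: Im_flux_bot)
  qed
  ultimately have "((\<lambda>s::real. Im (cnj (u t) * u' t) - (km * (1 - (cmod r)\<^sup>2))) \<longlongrightarrow> 0) at_bot"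
  proof -
    assume lim: "((\<lambda>s. Im (cnj (u s) * u' s) - Im (cnj (A s) * B s)) \<longlongrightarrow> 0) at_bot"
    have eq: "(\<lambda>s. Im (cnj (u s) * u' s) - Im (cnj (A s) * B s)) = (\<lambda>s::real. Im (cnj (u t) * u' t) - (km * (1 - (cmod r)\<^sup>2)))"
    proof (rule ext)
      fix s show "Im (cnj (u s) * u' s) - Im (cnj (A s) * B s) = Im (cnj (u t) * u' t) - (km * (1 - (cmod r)\<^sup>2))"
        using flux_const[of s t] imq[of s] by (simp only:)
    qed
    show ?thesis using lim unfolding eq .
  qed
  hence "((\<lambda>s::real. Im (cnj (u t) * u' t)) \<longlongrightarrow> km * (1 - (cmod r)\<^sup>2)) at_bot" by (simp add: LIM_zero_iff)
  thus ?thesis by (simp add: tendsto_const_iff)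
qed

lemma F_top:
  assumes "\<Delta>\<^sup>2 \<le> kp\<^sup>2"
  shows "((\<lambda>t. PP (sqrt (max (\<Delta>\<^sup>2) (k2 t))) (u t) (u' t)) \<longlongrightarrow> kp * (cmod \<tau>)\<^sup>2) at_top"
proof -
  define E where "E = (\<lambda>t. exp (\<i> * of_real (kp * t)))"
  have c: "((\<lambda>t. sqrt (max (\<Delta>\<^sup>2) (k2 t))) \<longlongrightarrow> kp) at_top"
  proof -
    have "((\<lambda>t. sqrt (max (\<Delta>\<^sup>2) (k2 t))) \<longlongrightarrow> sqrt (max (\<Delta>\<^sup>2) (kp\<^sup>2))) at_top"
      by (intro tendsto_intros lim_top)
    thus ?thesis using assms kp_pos by (simp add: max_def)
  qed
  have "((\<lambda>t. PP (sqrt (max (\<Delta>\<^sup>2) (k2 t))) (u t) (u' t)) \<longlongrightarrow> (2 * kp * cmod \<tau> + 0)\<^sup>2 / (4 * kp)) at_top"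
  proof (rule PP_lim[OF c kp_pos, where A = "\<lambda>t. \<tau> * E t" and B = "\<lambda>t. \<i> * of_real kp * \<tau> * E t" and M = "cmod \<tau>"])
    show "((\<lambda>t. u t - \<tau> * E t) \<longlongrightarrow> 0) at_top" using asym_top unfolding E_def .
    show "((\<lambda>t. u' t - \<i> * of_real kp * \<tau> * E t) \<longlongrightarrow> 0) at_top" using up_top unfolding E_def .
    show "norm (\<tau> * E t) \<le> cmod \<tau>" for t unfolding E_def by (simp add: norm_mult)
    show "norm (of_real kp * (\<tau> * E t) - \<i> * (\<i> * of_real kp * \<tau> * E t)) = 2 * kp * cmod \<tau>" for t
    proof -
      have eq: "of_real kp * (\<tau> * E t) - \<i> * (\<i> * of_real kp * \<tau> * E t) = 2 * of_real kp * \<tau> * E t"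
        by (simp add: algebra_simps)
      show ?thesis unfolding eq using kp_pos by (simp add: norm_mult E_def)
    qed
    show "norm (of_real kp * (\<tau> * E t) + \<i> * (\<i> * of_real kp * \<tau> * E t)) = 0" for t
      by (simp add: algebra_simps)
  qed
  moreover have "(2 * kp * cmod \<tau> + 0)\<^sup>2 / (4 * kp) = kp * (cmod \<tau>)\<^sup>2"
    using kp_pos by (simp add: power2_eq_square field_simps)
  ultimately show ?thesis by simp
qed

lemma F_bot:
  assumes "\<Delta>\<^sup>2 \<le> km\<^sup>2"
  shows "((\<lambda>t. PP (sqrt (max (\<Delta>\<^sup>2) (k2 t))) (u t) (u' t)) \<longlongrightarrow> km * (1 + cmod r)\<^sup>2) at_bot"
proof -
  define E where "E = (\<lambda>t. exp (\<i> * of_real (km * t)))"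
  define Em where "Em = (\<lambda>t. exp (\<i> * of_real ((-km) * t)))"
  have c: "((\<lambda>t. sqrt (max (\<Delta>\<^sup>2) (k2 t))) \<longlongrightarrow> km) at_bot"
  proof -
    have "((\<lambda>t. sqrt (max (\<Delta>\<^sup>2) (k2 t))) \<longlongrightarrow> sqrt (max (\<Delta>\<^sup>2) (km\<^sup>2))) at_bot"
      by (intro tendsto_intros lim_bot)
    thus ?thesis using assms km_pos by (simp add: max_def)
  qed
  have "((\<lambda>t. PP (sqrt (max (\<Delta>\<^sup>2) (k2 t))) (u t) (u' t)) \<longlongrightarrow> (2 * km + 2 * km * cmod r)\<^sup>2 / (4 * km)) at_bot"
  proof (rule PP_lim[OF c km_pos, where A = "\<lambda>t. E t + r * Em t" and B = "\<lambda>t. \<i> * of_real km * E t - \<i> * of_real km * r * Em t" and M = "1 + cmod r"])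
    show "((\<lambda>t. u t - (E t + r * Em t)) \<longlongrightarrow> 0) at_bot" using asym_bot unfolding E_def Em_def by simp
    show "((\<lambda>t. u' t - (\<i> * of_real km * E t - \<i> * of_real km * r * Em t)) \<longlongrightarrow> 0) at_bot" using up_bot unfolding E_def Em_def .
    show "norm (E t + r * Em t) \<le> 1 + cmod r" for t
    proof -
      have "norm (E t + r * Em t) \<le> norm (E t) + norm (r * Em t)" by (rule norm_triangle_ineq)
      also have "\<dots> = 1 + cmod r" unfolding E_def Em_def by (simp add: norm_mult norm_exp_eq_Re)
      finally show ?thesis .
    qed
    show "norm (of_real km * (E t + r * Em t) - \<i> * (\<i> * of_real km * E t - \<i> * of_real km * r * Em t)) = 2 * km" for t
    proof -
      have eq: "of_real km * (E t + r * Em t) - \<i> * (\<i> * of_real km * E t - \<i> * of_real km * r * Em t) = 2 * of_real km * E t"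
        by (simp add: algebra_simps)
      show ?thesis unfolding eq using km_pos by (simp add: norm_mult E_def norm_exp_eq_Re)
    qed
    show "norm (of_real km * (E t + r * Em t) + \<i> * (\<i> * of_real km * E t - \<i> * of_real km * r * Em t)) = 2 * km * cmod r" for t
    proof -
      have eq: "of_real km * (E t + r * Em t) + \<i> * (\<i> * of_real km * E t - \<i> * of_real km * r * Em t) = 2 * of_real km * r * Em t"
        by (simp add: algebra_simps)
      show ?thesis unfolding eq using km_pos by (simp add: norm_mult Em_def norm_exp_eq_Re)
    qed
  qed
  moreover have "(2 * km + 2 * km * cmod r)\<^sup>2 / (4 * km) = km * (1 + cmod r)\<^sup>2"
    using km_pos by (simp add: power2_eq_square field_simps)
  ultimately show ?thesis by simp
qed

end

lemma g_int:
  fixes k2 :: "real \<Rightarrow> real" and kp km \<Delta> :: real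
  assumes cont: "continuous_on UNIV k2" and Dpos: "\<Delta> > 0"
    and int_top: "\<exists>a. (\<lambda>x. k2 x - kp\<^sup>2) absolutely_integrable_on {a..}"
    and int_bot: "\<exists>a. (\<lambda>x. k2 x - km\<^sup>2) absolutely_integrable_on {..a}"
    and Dup: "\<Delta>\<^sup>2 \<le> min (kp\<^sup>2) (km\<^sup>2)"
  shows "(\<lambda>t. max (\<Delta>\<^sup>2 - k2 t) 0 / \<Delta>) absolutely_integrable_on UNIV"
proof -
  define g where "g = (\<lambda>t. max (\<Delta>\<^sup>2 - k2 t) 0 / \<Delta>)"
  have gc: "continuous_on UNIV g" unfolding g_def by (intro continuous_intros cont) (use Dpos in auto)
  obtain a1 where A1: "(\<lambda>x. k2 x - kp\<^sup>2) absolutely_integrable_on {a1..}" using int_top by blast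
  obtain a2 where A2: "(\<lambda>x. k2 x - km\<^sup>2) absolutely_integrable_on {..a2}" using int_bot by blast
  have P1: "g absolutely_integrable_on {a1..}"
  proof (rule measurable_bounded_by_integrable_imp_absolutely_integrable)
    show "g \<in> borel_measurable (lebesgue_on {a1..})"
      by (rule continuous_imp_measurable_on_sets_lebesgue[OF continuous_on_subset[OF gc]]) auto
    show "{a1..} \<in> sets lebesgue" by (simp add: borel_closed)
    have "(\<lambda>x. norm (k2 x - kp\<^sup>2)) integrable_on {a1..}" using A1 unfolding absolutely_integrable_on_def by (rule conjunct2)
    thus "(\<lambda>x. \<bar>k2 x - kp\<^sup>2\<bar> / \<Delta>) integrable_on {a1..}" using Dpos by simp
    show "norm (g x) \<le> \<bar>k2 x - kp\<^sup>2\<bar> / \<Delta>" for x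
    proof -
      have m: "max (\<Delta>\<^sup>2 - k2 x) 0 \<le> \<bar>k2 x - kp\<^sup>2\<bar>" using Dup by (simp add: max_def abs_if)
      have "norm (g x) = max (\<Delta>\<^sup>2 - k2 x) 0 / \<Delta>" unfolding g_def using Dpos by simp
      also have "\<dots> \<le> \<bar>k2 x - kp\<^sup>2\<bar> / \<Delta>" using m Dpos by (simp add: divide_right_mono)
      finally show ?thesis .
    qed
  qed
  have P2: "g absolutely_integrable_on {..a2}"
  proof (rule measurable_bounded_by_integrable_imp_absolutely_integrable)
    show "g \<in> borel_measurable (lebesgue_on {..a2})"
      by (rule continuous_imp_measurable_on_sets_lebesgue[OF continuous_on_subset[OF gc]]) auto
    show "{..a2} \<in> sets lebesgue" by (simp add: borel_closed)
    have "(\<lambda>x. norm (k2 x - km\<^sup>2)) integrable_on {..a2}" using A2 unfolding absolutely_integrable_on_def by (rule conjunct2)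
    thus "(\<lambda>x. \<bar>k2 x - km\<^sup>2\<bar> / \<Delta>) integrable_on {..a2}" using Dpos by simp
    show "norm (g x) \<le> \<bar>k2 x - km\<^sup>2\<bar> / \<Delta>" for x
    proof -
      have m: "max (\<Delta>\<^sup>2 - k2 x) 0 \<le> \<bar>k2 x - km\<^sup>2\<bar>" using Dup by (simp add: max_def abs_if)
      have "norm (g x) = max (\<Delta>\<^sup>2 - k2 x) 0 / \<Delta>" unfolding g_def using Dpos by simp
      also have "\<dots> \<le> \<bar>k2 x - km\<^sup>2\<bar> / \<Delta>" using m Dpos by (simp add: divide_right_mono)
      finally show ?thesis .
    qed
  qed
  have P3: "g absolutely_integrable_on {min a1 a2..max a1 a2}"
    by (rule absolutely_integrable_continuous_real[OF continuous_on_subset[OF gc]]) auto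
  have U: "UNIV = {..a2} \<union> {min a1 a2..max a1 a2} \<union> {a1..}" by auto
  have "g absolutely_integrable_on ({..a2} \<union> {min a1 a2..max a1 a2} \<union> {a1..})"
    by (intro absolutely_integrable_Un P1 P2 P3)
  thus ?thesis unfolding g_def[symmetric] using U by simp
qed

lemma final_alg:
  fixes \<rho> P km \<Theta> :: real
  assumes km: "km > 0" and P: "P = km * (1 - \<rho>\<^sup>2)" and r0: "\<rho> \<ge> 0"
    and ineq: "km * (1 + \<rho>)\<^sup>2 \<le> P * exp (2 * \<Theta>)"
  shows "P / km \<ge> (sech \<Theta>)\<^sup>2"
proof -
  define Y where "Y = exp (2 * \<Theta>)"
  have Y0: "Y > 0" unfolding Y_def by simp
  have i2: "(1 + \<rho>)\<^sup>2 \<le> (1 - \<rho>\<^sup>2) * Y" using ineq km unfolding P Y_def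
    by (simp add: mult.assoc)
  have r1: "\<rho> < 1"
  proof (rule ccontr)
    assume "\<not> \<rho> < 1"
    hence "1 \<le> \<rho>\<^sup>2" by (simp add: one_le_power)
    hence "1 - \<rho>\<^sup>2 \<le> 0" by simp
    hence "(1 - \<rho>\<^sup>2) * Y \<le> 0" using Y0 by (simp add: mult_nonpos_nonneg)
    moreover have "(1 + \<rho>)\<^sup>2 \<ge> 1" using r0 by (simp add: one_le_power)
    ultimately show False using i2 by linarith
  qed
  have "(1 + \<rho>) * (1 + \<rho>) \<le> ((1 - \<rho>) * Y) * (1 + \<rho>)" using i2 by (simp add: power2_eq_square algebra_simps)
  hence i3: "1 + \<rho> \<le> (1 - \<rho>) * Y" using r0 by simp
  hence "\<rho> * (Y + 1) \<le> Y - 1" by (simp add: algebra_simps)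
  hence rle: "\<rho> \<le> (Y - 1) / (Y + 1)" using Y0 by (simp add: le_divide_eq)
  hence rsq: "\<rho>\<^sup>2 \<le> ((Y - 1) / (Y + 1))\<^sup>2" using r0 by (intro power_mono) auto
  have "(sech \<Theta>)\<^sup>2 = 4 * Y / (Y + 1)\<^sup>2"
  proof -
    have "cosh \<Theta> = (exp \<Theta> + inverse (exp \<Theta>)) / 2" by (simp add: cosh_def exp_minus)
    moreover have "exp \<Theta> * exp \<Theta> = Y" unfolding Y_def by (simp flip: exp_add)
    ultimately have ch: "cosh \<Theta> = (Y + 1) / (2 * exp \<Theta>)"
      by (simp add: field_simps)
    have "(cosh \<Theta>)\<^sup>2 = (Y + 1)\<^sup>2 / (4 * (exp \<Theta> * exp \<Theta>))"
      unfolding ch by (simp add: power_divide power2_eq_square)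
    also have "exp \<Theta> * exp \<Theta> = Y" unfolding Y_def by (simp flip: exp_add)
    finally have "(cosh \<Theta>)\<^sup>2 = (Y + 1)\<^sup>2 / (4 * Y)" .
    thus ?thesis unfolding sech_def by (simp add: power_one_over)
  qed
  also have "4 * Y / (Y + 1)\<^sup>2 = 1 - ((Y - 1) / (Y + 1))\<^sup>2"
  proof -
    have nz: "(Y + 1)\<^sup>2 \<noteq> 0" using Y0 by simp
    have "1 - ((Y - 1) / (Y + 1))\<^sup>2 = ((Y + 1)\<^sup>2 - (Y - 1)\<^sup>2) / (Y + 1)\<^sup>2"
      using nz by (simp only: power_divide) (simp add: diff_divide_distrib)
    also have "(Y + 1)\<^sup>2 - (Y - 1)\<^sup>2 = 4 * Y" by (simp add: power2_eq_square algebra_simps)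
    finally show ?thesis by simp
  qed
  also have "\<dots> \<le> 1 - \<rho>\<^sup>2" using rsq by simp
  also have "1 - \<rho>\<^sup>2 = P / km" using km P by simp
  finally show ?thesis .
qed

lemma PP_nonneg: "c > 0 \<Longrightarrow> PP c z w \<ge> 0" unfolding PP_def by simp

theorem mainTheorem8:
  fixes k2 :: "real \<Rightarrow> real" and kp km x0 \<Delta> :: real
    and u u' :: "real \<Rightarrow> complex" and r \<tau> :: complex
  assumes kp_pos: "kp > 0" and km_pos: "km > 0"
    and lim_top: "(k2 \<longlongrightarrow> kp\<^sup>2) at_top"
    and lim_bot: "(k2 \<longlongrightarrow> km\<^sup>2) at_bot"
    and int_top: "\<exists>a. (\<lambda>x. k2 x - kp\<^sup>2) absolutely_integrable_on {a..}"
    and int_bot: "\<exists>a. (\<lambda>x. k2 x - km\<^sup>2) absolutely_integrable_on {..a}"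
    and cont: "continuous_on UNIV k2"
    and mono_left: "\<And>x y. x \<le> y \<Longrightarrow> y \<le> x0 \<Longrightarrow> k2 y \<le> k2 x"
    and mono_right: "\<And>x y. x0 \<le> x \<Longrightarrow> x \<le> y \<Longrightarrow> k2 x \<le> k2 y"
    and u_deriv: "\<And>x. (u has_vector_derivative u' x) (at x)"
    and u'_deriv: "\<And>x. (u' has_vector_derivative (- complex_of_real (k2 x) * u x)) (at x)"
    and asym_bot: "((\<lambda>x. u x - (exp (\<i> * of_real (km * x)) + r * exp (- \<i> * of_real (km * x))))
                      \<longlongrightarrow> 0) at_bot"
    and asym_top: "((\<lambda>x. u x - \<tau> * exp (\<i> * of_real (kp * x))) \<longlongrightarrow> 0) at_top"
    and Delta_pos: "\<Delta> > 0"
    and Delta_low: "k2 x0 \<le> \<Delta>\<^sup>2"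
    and Delta_up: "\<Delta>\<^sup>2 \<le> min (kp\<^sup>2) (km\<^sup>2)"
  shows "(kp / km) * (cmod \<tau>)\<^sup>2 \<ge>
    (sech (1/2 * ln (kp * km / \<Delta>\<^sup>2)
       + 1 / (2 * \<Delta>) * integral {x. k2 x < \<Delta>\<^sup>2} (\<lambda>x. \<Delta>\<^sup>2 - k2 x)))\<^sup>2"
proof -
  define g where "g = (\<lambda>t. max (\<Delta>\<^sup>2 - k2 t) 0 / \<Delta>)"
  define C where "C = (\<lambda>t. max (\<Delta>\<^sup>2) (k2 t))"
  define F where "F = (\<lambda>t. PP (sqrt (C t)) (u t) (u' t))"
  define L where "L = (\<lambda>t. ln (C t) / 2)"
  define Ig where "Ig = integral UNIV g"
  have gc: "continuous_on UNIV g" unfolding g_def by (intro continuous_intros cont) (use Delta_pos in auto)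
  have Cge: "\<Delta>\<^sup>2 \<le> C t" for t unfolding C_def by simp
  have kC: "\<bar>k2 t - C t\<bar> \<le> \<Delta> * g t" for t
    unfolding C_def g_def using Delta_pos by (auto simp: max_def)
  have g0: "g t \<ge> 0" for t unfolding g_def using Delta_pos by simp
  have Cpos: "C t > 0" for t using Cge[of t] Delta_pos by (smt (verit) zero_less_power)
  have Cx0: "C x0 = \<Delta>\<^sup>2" unfolding C_def using Delta_low by simp
  have gabs: "g absolutely_integrable_on UNIV" unfolding g_def
    by (rule g_int[OF cont Delta_pos int_top int_bot Delta_up])
  have gintU: "g integrable_on UNIV" using gabs unfolding absolutely_integrable_on_def by (rule conjunct1)
  have gint: "g integrable_on {a..b}" for a b
    by (intro integrable_continuous_real continuous_on_subset[OF gc]) auto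
  have F0: "F t \<ge> 0" for t unfolding F_def using Cpos[of t] by (intro PP_nonneg) simp
  note reg = region[OF u_deriv u'_deriv gc Delta_pos Cge kC]
  have key: "F a \<le> F b * exp (L a + L b - ln (\<Delta>\<^sup>2) + Ig)" if a: "a \<le> x0" and b: "x0 \<le> b" for a b
  proof -
    have left: "F a \<le> F x0 * exp (\<bar>L x0 - L a\<bar> + integral {a..x0} g)"
      unfolding F_def L_def
    proof (rule reg[OF a])
      show "(\<forall>x y. a \<le> x \<longrightarrow> x \<le> y \<longrightarrow> y \<le> x0 \<longrightarrow> C x \<le> C y) \<or> (\<forall>x y. a \<le> x \<longrightarrow> x \<le> y \<longrightarrow> y \<le> x0 \<longrightarrow> C y \<le> C x)"
        unfolding C_def by (intro disjI2 allI impI max.mono order_refl mono_left) auto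
    qed
    have right: "F x0 \<le> F b * exp (\<bar>L b - L x0\<bar> + integral {x0..b} g)"
      unfolding F_def L_def
    proof (rule reg[OF b])
      show "(\<forall>x y. x0 \<le> x \<longrightarrow> x \<le> y \<longrightarrow> y \<le> b \<longrightarrow> C x \<le> C y) \<or> (\<forall>x y. x0 \<le> x \<longrightarrow> x \<le> y \<longrightarrow> y \<le> b \<longrightarrow> C y \<le> C x)"
        unfolding C_def by (intro disjI1 allI impI max.mono order_refl mono_right) auto
    qed
    have La: "\<bar>L x0 - L a\<bar> = L a - ln (\<Delta>\<^sup>2) / 2"
      unfolding L_def Cx0 using Cge[of a] Cpos[of a] Delta_pos by simp
    have Lb: "\<bar>L b - L x0\<bar> = L b - ln (\<Delta>\<^sup>2) / 2"
      unfolding L_def Cx0 using Cge[of b] Cpos[of b] Delta_pos by simp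
    have comb: "integral {a..x0} g + integral {x0..b} g = integral {a..b} g"
      by (rule Henstock_Kurzweil_Integration.integral_combine[OF a b gint])
    have le: "integral {a..b} g \<le> Ig" unfolding Ig_def
      by (rule integral_subset_le[OF _ gint gintU]) (use g0 in auto)
    have "F a \<le> F b * exp (\<bar>L b - L x0\<bar> + integral {x0..b} g) * exp (\<bar>L x0 - L a\<bar> + integral {a..x0} g)"
      using left right by (smt (verit) exp_gt_zero mult_right_mono)
    also have "\<dots> = F b * exp (L a + L b - ln (\<Delta>\<^sup>2) + integral {a..b} g)"
      unfolding La Lb comb[symmetric] by (simp add: mult.assoc flip: exp_add)
    also have "\<dots> \<le> F b * exp (L a + L b - ln (\<Delta>\<^sup>2) + Ig)"
      using le F0[of b] by (intro mult_left_mono) auto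
    finally show ?thesis .
  qed
  have kmD: "\<Delta>\<^sup>2 \<le> km\<^sup>2" and kpD: "\<Delta>\<^sup>2 \<le> kp\<^sup>2" using Delta_up by auto
  have Fbot: "(F \<longlongrightarrow> km * (1 + cmod r)\<^sup>2) at_bot" unfolding F_def C_def
    by (rule F_bot[OF kp_pos km_pos lim_top lim_bot u_deriv u'_deriv asym_bot asym_top kmD])
  have Ftop: "(F \<longlongrightarrow> kp * (cmod \<tau>)\<^sup>2) at_top" unfolding F_def C_def
    by (rule F_top[OF kp_pos km_pos lim_top lim_bot u_deriv u'_deriv asym_bot asym_top kpD])
  have Lbot: "(L \<longlongrightarrow> ln (km\<^sup>2) / 2) at_bot"
  proof -
    have "((\<lambda>t. ln (max (\<Delta>\<^sup>2) (k2 t)) / 2) \<longlongrightarrow> ln (max (\<Delta>\<^sup>2) (km\<^sup>2)) / 2) at_bot"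
      using km_pos by (intro tendsto_intros lim_bot) (auto simp: max_def)
    thus ?thesis unfolding L_def C_def using kmD by (simp add: max_def)
  qed
  have Ltop: "(L \<longlongrightarrow> ln (kp\<^sup>2) / 2) at_top"
  proof -
    have "((\<lambda>t. ln (max (\<Delta>\<^sup>2) (k2 t)) / 2) \<longlongrightarrow> ln (max (\<Delta>\<^sup>2) (kp\<^sup>2)) / 2) at_top"
      using kp_pos by (intro tendsto_intros lim_top) (auto simp: max_def)
    thus ?thesis unfolding L_def C_def using kpD by (simp add: max_def)
  qed
  have step1: "km * (1 + cmod r)\<^sup>2 \<le> F b * exp (ln (km\<^sup>2) / 2 + L b - ln (\<Delta>\<^sup>2) + Ig)" if b: "x0 \<le> b" for b
  proof (rule tendsto_le[OF trivial_limit_at_bot_linorder _ Fbot])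
    show "((\<lambda>a. F b * exp (L a + L b - ln (\<Delta>\<^sup>2) + Ig)) \<longlongrightarrow> F b * exp (ln (km\<^sup>2) / 2 + L b - ln (\<Delta>\<^sup>2) + Ig)) at_bot"
      by (intro tendsto_intros Lbot)
    show "\<forall>\<^sub>F a in at_bot. F a \<le> F b * exp (L a + L b - ln (\<Delta>\<^sup>2) + Ig)"
      unfolding eventually_at_bot_linorder using key b by (intro exI[of _ x0]) auto
  qed
  have step2: "km * (1 + cmod r)\<^sup>2 \<le> kp * (cmod \<tau>)\<^sup>2 * exp (ln (km\<^sup>2) / 2 + ln (kp\<^sup>2) / 2 - ln (\<Delta>\<^sup>2) + Ig)"
  proof (rule tendsto_le[OF trivial_limit_at_top_linorder _ tendsto_const])
    show "((\<lambda>b. F b * exp (ln (km\<^sup>2) / 2 + L b - ln (\<Delta>\<^sup>2) + Ig)) \<longlongrightarrow> kp * (cmod \<tau>)\<^sup>2 * exp (ln (km\<^sup>2) / 2 + ln (kp\<^sup>2) / 2 - ln (\<Delta>\<^sup>2) + Ig)) at_top"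
      by (intro tendsto_intros Ftop Ltop)
    show "\<forall>\<^sub>F b in at_top. km * (1 + cmod r)\<^sup>2 \<le> F b * exp (ln (km\<^sup>2) / 2 + L b - ln (\<Delta>\<^sup>2) + Ig)"
      unfolding eventually_at_top_linorder using step1 by (intro exI[of _ x0]) auto
  qed
  have flux: "kp * (cmod \<tau>)\<^sup>2 = km * (1 - (cmod r)\<^sup>2)"
    using flux_top[OF kp_pos km_pos lim_top lim_bot u_deriv u'_deriv asym_bot asym_top, of 0]
      flux_bot[OF kp_pos km_pos lim_top lim_bot u_deriv u'_deriv asym_bot asym_top, of 0] by simp
  define \<Theta> where "\<Theta> = 1/2 * ln (kp * km / \<Delta>\<^sup>2) + 1 / (2 * \<Delta>) * integral {x. k2 x < \<Delta>\<^sup>2} (\<lambda>x. \<Delta>\<^sup>2 - k2 x)"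
  have intS: "integral {x. k2 x < \<Delta>\<^sup>2} (\<lambda>x. \<Delta>\<^sup>2 - k2 x) = \<Delta> * Ig"
  proof -
    have "integral {x. k2 x < \<Delta>\<^sup>2} (\<lambda>x. \<Delta>\<^sup>2 - k2 x) = integral UNIV (\<lambda>x. if x \<in> {x. k2 x < \<Delta>\<^sup>2} then \<Delta>\<^sup>2 - k2 x else 0)"
      by (rule integral_restrict_UNIV[symmetric])
    also have "(\<lambda>x. if x \<in> {x. k2 x < \<Delta>\<^sup>2} then \<Delta>\<^sup>2 - k2 x else 0) = (\<lambda>x. \<Delta> * g x)"
      unfolding g_def using Delta_pos by (auto simp: max_def)
    also have "integral UNIV (\<lambda>x. \<Delta> * g x) = \<Delta> * Ig" unfolding Ig_def
      by (rule integral_mult[OF gintU, symmetric])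
    finally show ?thesis .
  qed
  have Th: "2 * \<Theta> = ln (km\<^sup>2) / 2 + ln (kp\<^sup>2) / 2 - ln (\<Delta>\<^sup>2) + Ig"
  proof -
    have "ln (kp * km / \<Delta>\<^sup>2) = ln kp + ln km - ln (\<Delta>\<^sup>2)"
      using kp_pos km_pos Delta_pos by (simp add: ln_div ln_mult)
    moreover have "ln (km\<^sup>2) = 2 * ln km" "ln (kp\<^sup>2) = 2 * ln kp" using kp_pos km_pos by (simp_all add: ln_realpow)
    ultimately show ?thesis unfolding \<Theta>_def intS using Delta_pos by (simp add: field_simps)
  qed
  have "kp * (cmod \<tau>)\<^sup>2 / km \<ge> (sech \<Theta>)\<^sup>2"
    by (rule final_alg[OF km_pos flux norm_ge_zero]) (use step2 Th in simp)
  thus ?thesis unfolding \<Theta>_def by simp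
qed

end
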